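(* Let $\alpha_1$ and $\alpha_2$ be cocycles defined on the dynamical systems $(X_1,\mathcal B_1,\mu_1,\Gamma_1)$ and $(X_2,\mathcal B_2,\mu_2,\Gamma_2)$ respectively, with values in a group $G$ equipped with a subadditive function $\theta$. Assume $\alpha_1$ and $\alpha_2$ are weakly equivalent through an isomorphism $h:X_1\to X_2$. If $\gamma_1\in\Gamma_1$ and $\gamma_2=h\gamma_1h^{-1}$ are such that the maps $x_1\mapsto\theta(\alpha_1(x_1,\gamma_1))$ and $x_2\mapsto\theta(\alpha_2(x_2,\gamma_2))$ are integrable on $X_1$ and $X_2$ respectively, then $\Theta_{\mu_1}(\gamma_1,\alpha_1)=\Theta_{\mu_2}(\gamma_2,\alpha_2)$.
   Context: For a probability space $(X,\mathcal B,\mu)$, $\mathrm{Aut}(X,\mu)$ is the group of invertible measure-preserving transformations; $\Gamma_i$ is a subgroup of $\mathrm{Aut}(X_i,\mu_i)$. A measurable map $\alpha:X\times\Gamma\to G$ is a cocycle if for all $\gamma_1,\gamma_2\in\Gamma$ and $\mu$-a.e. $x$, $\alpha(x,\gamma_1\gamma_2)=\alpha(x,\gamma_1)\alpha(\gamma_1x,\gamma_2)$. A subadditive function on $G$ is a continuous $\theta:G\to\mathbb R^+$ with $\theta(g_1g_2)\le\theta(g_1)+\theta(g_2)$. Two cocycles $\alpha,\beta$ on the same system are cohomologous if there is a measurable $\phi:X\to G$ with $\beta(x,\gamma)=\phi(x)\alpha(x,\gamma)(\phi(\gamma x))^{-1}$ for all $\gamma\in\Gamma$ and $\mu$-a.e.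 $x$. An isomorphism $h:X_1\to X_2$ is an invertible transformation carrying $\mu_1$ onto $\mu_2$; for a cocycle $\alpha_1$ on $(X_1,\mathcal B_1,\mu_1,\Gamma_1)$ and $\Gamma_2=h\Gamma_1h^{-1}$, $h\circ\alpha_1$ is the cocycle on $(X_2,\mathcal B_2,\mu_2,\Gamma_2)$ given by $h\circ\alpha_1(x_2,\gamma_2)=\alpha_1(h^{-1}(x_2),h^{-1}\gamma_2h)$. The cocycles $\alpha_1,\alpha_2$ are weakly equivalent (through $h$) if $\Gamma_2=h\Gamma_1h^{-1}$ and $\alpha_2$ and $h\circ\alpha_1$ are cohomologous. If $x\mapsto\theta(\alpha(x,\gamma))$ is integrable, then for $\mu$-a.e. $x$ the limit $\Theta(x,\gamma,\alpha)=\lim_{n\to\infty}\frac1n\theta(\alpha(x,\gamma^n))$ exists and is integrable, and $\Theta_\mu(\gamma,\alpha):=\int\Theta(x,\gamma,\alpha)\,d\mu$. *)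

theory Defs
  imports "HOL-Probability.Probability"
begin

text \<open>Transformations of a measure space are total HOL functions; as a normalisation
  convention they act as the identity outside the space, so that two transformations
  agreeing on the space are equal.\<close>

definition measure_preserving :: "'a measure \<Rightarrow> 'b measure \<Rightarrow> ('a \<Rightarrow> 'b) set" where
  "measure_preserving M1 M2 = {T. T \<in> measurable M1 M2 \<and> distr M1 M2 T = M2}"

definition aut_inv :: "'a measure \<Rightarrow> ('a \<Rightarrow> 'a) \<Rightarrow> ('a \<Rightarrow> 'a)" where
  "aut_inv M T = (\<lambda>x. if x \<in> space M then the_inv_into (space M) T x else x)"

definition Aut :: "'a measure \<Rightarrow> ('a \<Rightarrow> 'a) set" where
  "Aut M = {T. bij_betw T (space M) (space M) \<and> (\<forall>x. x \<notin> space M \<longrightarrow> T x = x)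
              \<and> T \<in> measure_preserving M M \<and> aut_inv M T \<in> measure_preserving M M}"

text \<open>Group product: gamma1 gamma2 is the
  transformation "first gamma1, then gamma2", i.e. gamma2 o gamma1 (this is the
  convention under which the cocycle identity below is the standard one).\<close>
definition aut_subgroup :: "'a measure \<Rightarrow> ('a \<Rightarrow> 'a) set \<Rightarrow> bool" where
  "aut_subgroup M \<Gamma> \<longleftrightarrow> \<Gamma> \<subseteq> Aut M \<and> id \<in> \<Gamma>
     \<and> (\<forall>g1\<in>\<Gamma>. \<forall>g2\<in>\<Gamma>. g2 \<circ> g1 \<in> \<Gamma>) \<and> (\<forall>g\<in>\<Gamma>. aut_inv M g \<in> \<Gamma>)"

definition subadditive_fun :: "('g::{group_add,topological_space} \<Rightarrow> real) \<Rightarrow> bool" where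
  "subadditive_fun \<theta> \<longleftrightarrow> continuous_on UNIV \<theta> \<and> (\<forall>g. \<theta> g \<ge> 0)
     \<and> (\<forall>g1 g2. \<theta> (g1 + g2) \<le> \<theta> g1 + \<theta> g2)"

text \<open>The group G is written additively (class group_add, not necessarily commutative).\<close>
definition cocycle ::
  "'a measure \<Rightarrow> ('a \<Rightarrow> 'a) set \<Rightarrow> ('a \<Rightarrow> ('a \<Rightarrow> 'a) \<Rightarrow> 'g::{group_add,topological_space}) \<Rightarrow> bool" where
  "cocycle M \<Gamma> \<alpha> \<longleftrightarrow> (\<forall>\<gamma>\<in>\<Gamma>. (\<lambda>x. \<alpha> x \<gamma>) \<in> borel_measurable M)
     \<and> (\<forall>g1\<in>\<Gamma>. \<forall>g2\<in>\<Gamma>. AE x in M. \<alpha> x (g2 \<circ> g1) = \<alpha> x g1 + \<alpha> (g1 x) g2)"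

definition cohomologous ::
  "'a measure \<Rightarrow> ('a \<Rightarrow> 'a) set \<Rightarrow> ('a \<Rightarrow> ('a \<Rightarrow> 'a) \<Rightarrow> 'g::{group_add,topological_space})
     \<Rightarrow> ('a \<Rightarrow> ('a \<Rightarrow> 'a) \<Rightarrow> 'g) \<Rightarrow> bool" where
  "cohomologous M \<Gamma> \<alpha> \<beta> \<longleftrightarrow> (\<exists>\<phi>. \<phi> \<in> borel_measurable M \<and>
     (\<forall>\<gamma>\<in>\<Gamma>. AE x in M. \<beta> x \<gamma> = \<phi> x + \<alpha> x \<gamma> - \<phi> (\<gamma> x)))"

definition isomorphism :: "'a measure \<Rightarrow> 'b measure \<Rightarrow> ('a \<Rightarrow> 'b) \<Rightarrow> bool" where
  "isomorphism M1 M2 h \<longleftrightarrow> bij_betw h (space M1) (space M2) \<and> h \<in> measure_preserving M1 M2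
     \<and> the_inv_into (space M1) h \<in> measure_preserving M2 M1"

definition conj_by :: "'a measure \<Rightarrow> 'b measure \<Rightarrow> ('a \<Rightarrow> 'b) \<Rightarrow> ('a \<Rightarrow> 'a) \<Rightarrow> ('b \<Rightarrow> 'b)" where
  "conj_by M1 M2 h \<gamma> = (\<lambda>y. if y \<in> space M2 then h (\<gamma> (the_inv_into (space M1) h y)) else y)"

definition transport_cocycle ::
  "'a measure \<Rightarrow> 'b measure \<Rightarrow> ('a \<Rightarrow> 'b) \<Rightarrow> ('a \<Rightarrow> ('a \<Rightarrow> 'a) \<Rightarrow> 'g) \<Rightarrow> ('b \<Rightarrow> ('b \<Rightarrow> 'b) \<Rightarrow> 'g)" where
  "transport_cocycle M1 M2 h \<alpha> = (\<lambda>y \<gamma>. \<alpha> (the_inv_into (space M1) h y)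
      (\<lambda>x. if x \<in> space M1 then the_inv_into (space M1) h (\<gamma> (h x)) else x))"

definition weakly_equivalent_through ::
  "'a measure \<Rightarrow> ('a \<Rightarrow> 'a) set \<Rightarrow> ('a \<Rightarrow> ('a \<Rightarrow> 'a) \<Rightarrow> 'g::{group_add,topological_space})
   \<Rightarrow> 'b measure \<Rightarrow> ('b \<Rightarrow> 'b) set \<Rightarrow> ('b \<Rightarrow> ('b \<Rightarrow> 'b) \<Rightarrow> 'g) \<Rightarrow> ('a \<Rightarrow> 'b) \<Rightarrow> bool" where
  "weakly_equivalent_through M1 \<Gamma>1 \<alpha>1 M2 \<Gamma>2 \<alpha>2 h \<longleftrightarrow> isomorphism M1 M2 h
     \<and> \<Gamma>2 = conj_by M1 M2 h ` \<Gamma>1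
     \<and> cohomologous M2 \<Gamma>2 (transport_cocycle M1 M2 h \<alpha>1) \<alpha>2"

definition Theta_pt :: "('g \<Rightarrow> real) \<Rightarrow> ('a \<Rightarrow> ('a \<Rightarrow> 'a) \<Rightarrow> 'g) \<Rightarrow> ('a \<Rightarrow> 'a) \<Rightarrow> 'a \<Rightarrow> real" where
  "Theta_pt \<theta> \<alpha> \<gamma> x = lim (\<lambda>n. \<theta> (\<alpha> x (\<gamma> ^^ n)) / real n)"

definition Theta_mu :: "'a measure \<Rightarrow> ('g \<Rightarrow> real) \<Rightarrow> ('a \<Rightarrow> ('a \<Rightarrow> 'a) \<Rightarrow> 'g) \<Rightarrow> ('a \<Rightarrow> 'a) \<Rightarrow> real" where
  "Theta_mu M \<theta> \<alpha> \<gamma> = (\<integral>x. Theta_pt \<theta> \<alpha> \<gamma> x \<partial>M)"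

end

theory Submission imports Defs begin

lemma cover_pointwise:
  fixes w :: "nat \<Rightarrow> nat \<Rightarrow> real" and a b :: "nat \<Rightarrow> real" and good :: "nat \<Rightarrow> bool"
    and L n :: nat
  assumes sub: "\<And>p q k. 1 \<le> p \<Longrightarrow> 1 \<le> q \<Longrightarrow> w (p+q) k \<le> w p k + w q (k+p)"
    and one: "\<And>k. w 1 k \<le> a k + b k"
    and bnn: "\<And>k. 0 \<le> b k"
    and gd: "\<And>k. good k \<Longrightarrow> \<exists>N. 1 \<le> N \<and> N \<le> L \<and> w N k \<le> (\<Sum>i<N. a (k+i))"
  shows "k < n \<Longrightarrow> w (n-k) k \<le> (\<Sum>j\<in>{k..<n}. a j + (if \<not> good j \<or> n < j + L then b j else 0))"
proof (induction "n - k" arbitrary: k rule: less_induct)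
  case less
  define c where "c j = (if \<not> good j \<or> n < j + L then b j else 0)" for j
  have cnn: "0 \<le> c j" for j using bnn by (simp add: c_def)
  have mono: "(\<Sum>j\<in>{p..<q}. a j) \<le> (\<Sum>j\<in>{p..<q}. a j + c j)" for p q
    by (rule sum_mono) (use cnn in auto)
  have split: "(\<Sum>j\<in>{k..<n}. a j + c j) = (\<Sum>j\<in>{k..<m}. a j + c j) + (\<Sum>j\<in>{m..<n}. a j + c j)"
    if "k \<le> m" "m \<le> n" for m
    using that by (simp add: sum.atLeastLessThan_concat)
  have shift: "(\<Sum>i<N. a (k+i)) = (\<Sum>j\<in>{k..<k+N}. a j)" for N
  proof -
    have "(\<Sum>j\<in>{k..<k+N}. a j) = (\<Sum>j\<in>{0+k..<N+k}. a j)" by (simp add: add.commute)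
    also have "\<dots> = (\<Sum>i\<in>{0..<N}. a (i+k))" by (rule sum.shift_bounds_nat_ivl)
    finally show ?thesis by (simp add: atLeast0LessThan add.commute)
  qed
  show ?case
  proof (cases "good k \<and> (\<exists>N. 1 \<le> N \<and> N \<le> L \<and> w N k \<le> (\<Sum>i<N. a (k+i)) \<and> N \<le> n - k)")
    case True
    then obtain N where N: "1 \<le> N" "N \<le> L" "w N k \<le> (\<Sum>i<N. a (k+i))" "N \<le> n - k" by blast
    show ?thesis
    proof (cases "N = n - k")
      case True
      have kn: "k + N = n" using True less.prems by simp
      have "w (n-k) k \<le> (\<Sum>j\<in>{k..<k+N}. a j)" using N(3) True shift[of N] by simp
      also have "\<dots> = (\<Sum>j\<in>{k..<n}. a j)" using kn by simp
      also have "\<dots> \<le> (\<Sum>j\<in>{k..<n}. a j + c j)" by (rule mono)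
      finally show ?thesis by (simp add: c_def)
    next
      case False
      then have lt: "N < n - k" using N by simp
      have "w (n-k) k = w (N + (n - (k+N))) k" using lt by (simp add: algebra_simps)
      also have "\<dots> \<le> w N k + w (n - (k+N)) (k+N)" by (rule sub) (use N lt in auto)
      also have "w (n - (k+N)) (k+N) \<le> (\<Sum>j\<in>{k+N..<n}. a j + c j)"
        using less.hyps[of "k+N"] lt N unfolding c_def by auto
      also have "w N k \<le> (\<Sum>j\<in>{k..<k+N}. a j + c j)" using N(3) shift[of N] mono[of k "k+N"] by linarith
      finally show ?thesis using split[of "k+N"] lt unfolding c_def by simp
    qed
  next
    case False
    have ck: "c k = b k"
    proof (cases "good k")
      case True
      then obtain N where N: "1 \<le> N" "N \<le> L" "w N k \<le> (\<Sum>i<N. a (k+i))" using gd by blast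
      with False True have "n - k < N" by auto
      then have "n < k + L" using N(2) less.prems by linarith
      then show ?thesis by (simp add: c_def)
    qed (simp add: c_def)
    show ?thesis
    proof (cases "n - k = 1")
      case True
      then have "n = Suc k" using less.prems by simp
      then have e: "{k..<n} = {k}" by auto
      have "w (n-k) k \<le> a k + c k" using one[of k] ck True by simp
      also have "\<dots> = (\<Sum>j\<in>{k..<n}. a j + c j)" by (subst e) simp
      finally show ?thesis unfolding c_def .
    next
      case False
      then have lt: "1 < n - k" using less.prems by linarith
      have "n - k = 1 + (n - Suc k)" using lt by linarith
      then have "w (n-k) k = w (1 + (n - Suc k)) k" by simp
      also have "\<dots> \<le> w 1 k + w (n - Suc k) (k+1)" by (rule sub) (use lt in auto)
      also have "w (n - Suc k) (k+1) \<le> (\<Sum>j\<in>{Suc k..<n}. a j + c j)"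
        using less.hyps[of "Suc k"] lt unfolding c_def by auto
      also have "w 1 k \<le> a k + c k" using one ck by simp
      finally show ?thesis using less.prems unfolding c_def by (simp add: sum.atLeast_Suc_lessThan)
    qed
  qed
qed

locale mpt = prob_space M for M :: "'a measure" +
  fixes T :: "'a \<Rightarrow> 'a"
  assumes T_meas[measurable]: "T \<in> measurable M M"
    and T_pres: "distr M M T = M"
begin

lemma Tn_meas[measurable]: "(T ^^ n) \<in> measurable M M"
  by (induction n) (auto intro: measurable_comp[OF _ T_meas])

lemma Tn_pres: "distr M M (T ^^ n) = M"
proof (induction n)
  case 0 then show ?case by (simp add: distr_id2[symmetric] id_def) 
next
  case (Suc n)
  have "distr M M (T ^^ Suc n) = distr M M (T \<circ> (T ^^ n))" by simp
  also have "\<dots> = distr (distr M M (T ^^ n)) M T"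
    by (rule distr_distr[symmetric]) auto
  also have "\<dots> = M" using Suc T_pres by simp
  finally show ?case .
qed

lemma Tn_space: "x \<in> space M \<Longrightarrow> (T ^^ n) x \<in> space M"
  using measurable_space[OF Tn_meas] by blast

lemma mpt_power: "mpt M (T ^^ n)"
  by unfold_locales (auto simp: Tn_pres)

lemma integral_Tn:
  fixes f :: "'a \<Rightarrow> real"
  assumes [measurable]: "f \<in> borel_measurable M"
  shows "(\<integral>x. f ((T ^^ n) x) \<partial>M) = (\<integral>x. f x \<partial>M)"
proof -
  have "(\<integral>x. f x \<partial>M) = (\<integral>x. f x \<partial>distr M M (T ^^ n))" by (simp add: Tn_pres)
  also have "\<dots> = (\<integral>x. f ((T ^^ n) x) \<partial>M)" by (rule integral_distr) auto
  finally show ?thesis by simp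
qed

lemma integrable_Tn:
  fixes f :: "'a \<Rightarrow> real"
  assumes "integrable M f"
  shows "integrable M (\<lambda>x. f ((T ^^ n) x))"
proof -
  have "integrable (distr M M (T ^^ n)) f" using assms by (simp add: Tn_pres)
  then show ?thesis using assms by (subst (asm) integrable_distr_eq) auto
qed

lemma emeasure_Tn: "A \<in> sets M \<Longrightarrow> emeasure M ((T ^^ n) -` A \<inter> space M) = emeasure M A"
  by (metis Tn_meas Tn_pres emeasure_distr)

lemma AE_Tn: "AE x in M. P x \<Longrightarrow> AE x in M. P ((T ^^ n) x)"
proof -
  assume "AE x in M. P x"
  then obtain N where N: "N \<in> null_sets M" "{x\<in>space M. \<not> P x} \<subseteq> N"
    unfolding eventually_ae_filter by blast
  have "(T ^^ n) -` N \<inter> space M \<in> null_sets M"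
    using N(1) emeasure_Tn[of N n] by (auto simp: null_sets_def)
  moreover have "{x\<in>space M. \<not> P ((T ^^ n) x)} \<subseteq> (T ^^ n) -` N \<inter> space M"
    using N(2) Tn_space by auto
  ultimately show ?thesis by (auto intro: AE_I')
qed

lemma AE_orbit: "AE x in M. P x \<Longrightarrow> AE x in M. \<forall>n. P ((T ^^ n) x)"
  by (simp add: AE_all_countable AE_Tn)


lemma integral_sum_Tn:
  fixes f :: "'a \<Rightarrow> real"
  assumes "integrable M f"
  shows "(\<integral>x. (\<Sum>j<n. f ((T^^j) x)) \<partial>M) = n * (\<integral>x. f x \<partial>M)"
proof -
  have "(\<integral>x. (\<Sum>j<n. f ((T^^j) x)) \<partial>M) = (\<Sum>j<n. (\<integral>x. f ((T^^j) x) \<partial>M))"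
    by (rule Bochner_Integration.integral_sum) (use integrable_Tn[OF assms] in auto)
  also have "\<dots> = (\<Sum>j<n. (\<integral>x. f x \<partial>M))"
    using integral_Tn[of f] assms by simp
  finally show ?thesis by simp
qed

lemma covering_integral:
  fixes u :: "nat \<Rightarrow> 'a \<Rightarrow> real" and G b :: "'a \<Rightarrow> real" and B :: "'a set" and L n :: nat
  assumes n: "1 \<le> n"
    and int_un: "integrable M (u n)"
    and intG: "integrable M G" and intb: "integrable M b" and bnn: "\<And>x. 0 \<le> b x"
    and B[measurable]: "B \<in> sets M"
    and AEsub: "AE x in M. \<forall>p q k. 1 \<le> p \<longrightarrow> 1 \<le> q \<longrightarrow>
                  u (p+q) ((T^^k) x) \<le> u p ((T^^k) x) + u q ((T^^(k+p)) x)"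
    and AEone: "AE x in M. \<forall>k. u 1 ((T^^k) x) \<le> G ((T^^k) x) + b ((T^^k) x)"
    and AEgood: "AE x in M. \<forall>k. (T^^k) x \<notin> B \<longrightarrow>
                  (\<exists>N. 1 \<le> N \<and> N \<le> L \<and> u N ((T^^k) x) \<le> (\<Sum>i<N. G ((T^^(k+i)) x)))"
  shows "(\<integral>x. u n x \<partial>M) \<le> n * (\<integral>x. G x \<partial>M) + n * (\<integral>x. indicator B x * b x \<partial>M) + L * (\<integral>x. b x \<partial>M)"
proof -
  have [measurable]: "G \<in> borel_measurable M" "b \<in> borel_measurable M" using intG intb by auto
  have intBb: "integrable M (\<lambda>x. indicator B x * b x)"
    using integrable_real_mult_indicator[OF B intb] by (simp add: mult.commute)
  define R where "R x = (\<Sum>j<n. G ((T^^j) x)) + (\<Sum>j<n. indicator B ((T^^j) x) * b ((T^^j) x))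
      + (\<Sum>j<n. if n < j + L then b ((T^^j) x) else 0)" for x
  have ptw: "AE x in M. u n x \<le> R x"
    using AEsub AEone AEgood
  proof eventually_elim
    case (elim x)
    have "u (n - 0) ((T^^0) x) \<le> (\<Sum>j\<in>{0..<n}. G ((T^^j) x) + (if \<not> (T^^j) x \<notin> B \<or> n < j + L then b ((T^^j) x) else 0))"
      by (rule cover_pointwise[where w="\<lambda>m k. u m ((T^^k) x)" and a="\<lambda>j. G ((T^^j) x)"
            and b="\<lambda>j. b ((T^^j) x)" and good="\<lambda>j. (T^^j) x \<notin> B" and L=L])
        (use elim bnn n in auto)
    also have "\<dots> \<le> (\<Sum>j\<in>{0..<n}. G ((T^^j) x) + indicator B ((T^^j) x) * b ((T^^j) x)
                 + (if n < j + L then b ((T^^j) x) else 0))"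
      by (rule sum_mono) (auto simp: bnn indicator_def)
    also have "\<dots> = R x" by (simp add: R_def sum.distrib atLeast0LessThan)
    finally show ?case by simp
  qed
  have intIf: "integrable M (\<lambda>x. if n < j + L then b ((T^^j) x) else 0)" for j
    by (cases "n < j + L") (simp_all add: integrable_Tn[OF intb])
  have intR: "integrable M R" unfolding R_def
    by (intro Bochner_Integration.integrable_add Bochner_Integration.integrable_sum intIf
        integrable_Tn[OF intG] integrable_Tn[OF intBb])
  have I1: "(\<integral>x. (\<Sum>j<n. indicator B ((T^^j) x) * b ((T^^j) x)) \<partial>M) = n * (\<integral>x. indicator B x * b x \<partial>M)"
    using integral_sum_Tn[OF intBb, of n] by simp
  have I2: "(\<integral>x. (\<Sum>j<n. G ((T^^j) x)) \<partial>M) = n * (\<integral>x. G x \<partial>M)"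
    using integral_sum_Tn[OF intG, of n] by simp
  have "(\<integral>x. u n x \<partial>M) \<le> (\<integral>x. R x \<partial>M)"
    by (rule integral_mono_AE[OF int_un intR ptw])
  also have "\<dots> = n * (\<integral>x. G x \<partial>M) + n * (\<integral>x. indicator B x * b x \<partial>M)
      + (\<integral>x. (\<Sum>j<n. if n < j + L then b ((T^^j) x) else 0) \<partial>M)"
    unfolding R_def
    apply (subst Bochner_Integration.integral_add)
      apply (intro Bochner_Integration.integrable_add Bochner_Integration.integrable_sum integrable_Tn intG intBb; simp)
     apply (intro Bochner_Integration.integrable_sum intIf)
    apply (subst Bochner_Integration.integral_add)
      apply (intro Bochner_Integration.integrable_sum integrable_Tn intG intBb; simp)
     apply (intro Bochner_Integration.integrable_sum integrable_Tn intG intBb; simp)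
    apply (simp only: I1 I2)
    done
  also have "(\<integral>x. (\<Sum>j<n. if n < j + L then b ((T^^j) x) else 0) \<partial>M)
      = (\<Sum>j<n. if n < j + L then (\<integral>x. b x \<partial>M) else 0)"
    apply (subst Bochner_Integration.integral_sum)
    apply (rule intIf)
    apply (rule sum.cong[OF refl])
    apply (auto simp: integral_Tn)
    done
  also have "\<dots> = card {j\<in>{..<n}. n < j + L} * (\<integral>x. b x \<partial>M)"
    by (simp add: sum.If_cases Int_def)
  also have "\<dots> \<le> L * (\<integral>x. b x \<partial>M)"
  proof (rule mult_right_mono)
    have "{j\<in>{..<n}. n < j + L} \<subseteq> {n - L..<n}" by auto
    then have "card {j\<in>{..<n}. n < j + L} \<le> card {n - L..<n}" by (intro card_mono) simp_all
    also have "\<dots> \<le> L" by simp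
    finally show "real (card {j\<in>{..<n}. n < j + L}) \<le> real L" by simp
    show "0 \<le> (\<integral>x. b x \<partial>M)" using bnn by simp
  qed
  finally show ?thesis by simp
qed


lemma Tn_Tn: "(T^^a) ((T^^b) x) = (T^^(a+b)) x"
  by (simp add: funpow_add)

lemma invariant_real:
  fixes F :: "'a \<Rightarrow> real"
  assumes [measurable]: "F \<in> borel_measurable M" and bnd: "\<And>x. x \<in> space M \<Longrightarrow> \<bar>F x\<bar> \<le> C"
    and le: "AE x in M. F x \<le> F (T x)"
  shows "AE x in M. F (T x) = F x"
proof -
  have intF: "integrable M F" by (rule integrable_const_bound[of _ C]) (use bnd in auto)
  have intFT: "integrable M (\<lambda>x. F (T x))"
    using integrable_Tn[OF intF, of 1] by simp
  have "(\<integral>x. F (T x) - F x \<partial>M) = (\<integral>x. F (T x) \<partial>M) - (\<integral>x. F x \<partial>M)"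
    using intF intFT by simp
  also have "(\<integral>x. F (T x) \<partial>M) = (\<integral>x. F x \<partial>M)" using integral_Tn[of F 1] by simp
  finally have "(\<integral>x. F (T x) - F x \<partial>M) = 0" by simp
  moreover have "AE x in M. 0 \<le> F (T x) - F x" using le by auto
  ultimately have "AE x in M. F (T x) - F x = 0"
    using integral_nonneg_eq_0_iff_AE[where f="\<lambda>x. F (T x) - F x" and M=M] intF intFT by auto
  then show ?thesis by auto
qed

lemma ennreal_min_nat_eq:
  fixes a b :: ennreal
  assumes "\<And>K::nat. min a (of_nat K) = min b (of_nat K)"
  shows "a = b"
proof (rule ccontr)
  assume "a \<noteq> b"
  then consider "a < b" | "b < a" by (meson linorder_neqE)
  then show False
  proof cases
    case 1
    then have "a < top" using top.not_eq_extremum by fastforce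
    then obtain K :: nat where "a < of_nat K"
      by (metis ennreal_SUP_of_nat_eq_top less_SUP_iff)
    then have "min a (of_nat K) = a" "a < min b (of_nat K)" using 1 by auto
    then show False using assms[of K] by simp
  next
    case 2
    then have "b < top" using top.not_eq_extremum by fastforce
    then obtain K :: nat where "b < of_nat K"
      by (metis ennreal_SUP_of_nat_eq_top less_SUP_iff)
    then have "min b (of_nat K) = b" "b < min a (of_nat K)" using 2 by auto
    then show False using assms[of K] by simp
  qed
qed

lemma invariant_ennreal:
  fixes F :: "'a \<Rightarrow> ennreal"
  assumes [measurable]: "F \<in> borel_measurable M"
    and le: "AE x in M. F x \<le> F (T x)"
  shows "AE x in M. F (T x) = F x"
proof -
  have "AE x in M. enn2real (min (F (T x)) (of_nat K)) = enn2real (min (F x) (of_nat K))" for K :: nat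
  proof (rule invariant_real[where F="\<lambda>x. enn2real (min (F x) (of_nat K))" and C=K])
    show "(\<lambda>x. enn2real (min (F x) (of_nat K))) \<in> borel_measurable M" by measurable
    show "\<bar>enn2real (min (F x) (of_nat K))\<bar> \<le> real K" for x
    proof -
      have "enn2real (min (F x) (of_nat K)) \<le> enn2real (of_nat K :: ennreal)"
        by (rule enn2real_mono) (auto simp: of_nat_less_top)
      then show ?thesis by simp
    qed
    show "AE x in M. enn2real (min (F x) (of_nat K)) \<le> enn2real (min (F (T x)) (of_nat K))"
    using le proof eventually_elim
      fix x assume "F x \<le> F (T x)"
      then have "min (F x) (of_nat K) \<le> min (F (T x)) (of_nat K)" by (intro min.mono) auto
      then show "enn2real (min (F x) (of_nat K)) \<le> enn2real (min (F (T x)) (of_nat K))"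
        by (intro enn2real_mono) (auto simp: min_less_iff_disj of_nat_less_top)
    qed
  qed
  then have "AE x in M. \<forall>K::nat. enn2real (min (F (T x)) (of_nat K)) = enn2real (min (F x) (of_nat K))"
    by (simp add: AE_all_countable)
  then show ?thesis
  proof (rule AE_mp, intro AE_I2 impI)
    fix x assume H: "\<forall>K::nat. enn2real (min (F (T x)) (of_nat K)) = enn2real (min (F x) (of_nat K))"
    have "min (F (T x)) (of_nat K) = min (F x) (of_nat K)" for K :: nat
    proof -
      have f1: "min (F (T x)) (of_nat K) < top" "min (F x) (of_nat K) < top"
        by (auto simp: min_less_iff_disj of_nat_less_top)
      have "min (F (T x)) (of_nat K) = ennreal (enn2real (min (F (T x)) (of_nat K)))"
        using f1 by (simp add: ennreal_enn2real)
      also have "\<dots> = ennreal (enn2real (min (F x) (of_nat K)))" using H by simp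
      also have "\<dots> = min (F x) (of_nat K)" using f1 by (simp add: ennreal_enn2real)
      finally show ?thesis .
    qed
    then show "F (T x) = F x" by (rule ennreal_min_nat_eq)
  qed
qed

lemma invariant_orbit:
  assumes "AE x in M. F (T x) = F x"
  shows "AE x in M. \<forall>k. F ((T^^k) x) = F x"
proof -
  have "AE x in M. \<forall>k. F (T ((T^^k) x)) = F ((T^^k) x)" using AE_orbit[OF assms] .
  then show ?thesis
  proof (rule AE_mp, intro AE_I2 impI allI)
    fix x k assume H: "\<forall>k. F (T ((T^^k) x)) = F ((T^^k) x)"
    show "F ((T^^k) x) = F x" by (induction k) (use H in auto)
  qed
qed


lemma sum_lessThan_add_split:
  fixes f :: "nat \<Rightarrow> real"
  shows "(\<Sum>i<p+q. f i) = (\<Sum>i<p. f i) + (\<Sum>i<q. f (p+i))"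
  by (induction q) auto

lemma birkhoff_half:
  fixes h :: "'a \<Rightarrow> real"
  assumes inth: "integrable M h" and hnn: "\<And>x. 0 \<le> h x"
  shows "(\<integral>\<^sup>+x. limsup (\<lambda>n. ennreal ((\<Sum>k<n. h ((T^^k) x)) / n)) \<partial>M) \<le> ennreal (\<integral>x. h x \<partial>M)"
proof -
  have hm[measurable]: "h \<in> borel_measurable M" using inth by auto
  define S where "S n x = (\<Sum>k<n. h ((T^^k) x))" for n x
  define Lam where "Lam x = limsup (\<lambda>n. ennreal (S n x / n))" for x
  have Sm[measurable]: "(\<lambda>x. S n x) \<in> borel_measurable M" for n unfolding S_def by measurable
  have Lm[measurable]: "Lam \<in> borel_measurable M" unfolding Lam_def by measurable
  have Snn: "0 \<le> S n x" for n x by (simp add: S_def sum_nonneg hnn)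
  have S_Suc: "S (Suc n) x = h x + S n (T x)" for n x
    unfolding S_def sum.lessThan_Suc_shift by (simp add: funpow_Suc_right del: funpow.simps)
  have intS: "integrable M (\<lambda>x. S n x)" for n
    unfolding S_def by (intro Bochner_Integration.integrable_sum integrable_Tn[OF inth])
  have intSn: "(\<integral>x. S n x \<partial>M) = n * (\<integral>x. h x \<partial>M)" for n
    unfolding S_def by (rule integral_sum_Tn[OF inth])
  have Lam_le: "Lam x \<le> Lam (T x)" if x: "x \<in> space M" for x
  proof (rule ennreal_le_epsilon)
    fix e :: real assume e: "0 < e"
    have ev: "eventually (\<lambda>n. h x / real (Suc n) \<le> e) sequentially"
    proof -
      have "(\<lambda>n. h x / real (Suc n)) \<longlonglongrightarrow> 0"
        using LIMSEQ_Suc[OF lim_const_over_n[of "h x"]] by simp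
      from order_tendstoD(2)[OF this e] show ?thesis by (rule eventually_mono) simp
    qed
    have "eventually (\<lambda>n. ennreal (S (Suc n) x / real (Suc n)) \<le> ennreal e + ennreal (S n (T x) / n)) sequentially"
      using ev
    proof eventually_elim
      case (elim n)
      have "S (Suc n) x / real (Suc n) = h x / real (Suc n) + S n (T x) / real (Suc n)"
        by (simp add: S_Suc add_divide_distrib)
      also have "S n (T x) / real (Suc n) \<le> S n (T x) / n"
        using Snn[of n "T x"] by (cases n) (auto intro!: divide_left_mono simp: S_def)
      finally have "S (Suc n) x / real (Suc n) \<le> e + S n (T x) / n" using elim by linarith
      then show ?case
        by (metis Snn divide_nonneg_nonneg ennreal_leI ennreal_plus e less_imp_le of_nat_0_le_iff)
    qed
    then have "limsup (\<lambda>n. ennreal (S (Suc n) x / real (Suc n))) \<le> limsup (\<lambda>n. ennreal e + ennreal (S n (T x) / n))"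
      by (rule Limsup_mono)
    also have "\<dots> = ennreal e + Lam (T x)" unfolding Lam_def
      by (rule Limsup_const_add) simp
    also have "limsup (\<lambda>n. ennreal (S (Suc n) x / real (Suc n))) = Lam x"
      unfolding Lam_def using limsup_shift[of "\<lambda>n. ennreal (S n x / real n)"] by simp
    finally show "Lam x \<le> Lam (T x) + ennreal e" by (simp add: add.commute)
  qed
  have Lam_orb: "AE x in M. \<forall>k. Lam ((T^^k) x) = Lam x"
    by (rule invariant_orbit[OF invariant_ennreal[OF Lm AE_I2[OF Lam_le]]])
  have trunc: "(\<integral>\<^sup>+x. min (Lam x) (of_nat K) \<partial>M) \<le> ennreal (\<integral>x. h x \<partial>M)" for K :: nat
  proof -
    define F where "F x = enn2real (min (Lam x) (of_nat K))" for x
    have Fm[measurable]: "F \<in> borel_measurable M" unfolding F_def by measurable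
    have fin: "min (Lam x) (of_nat K) < top" for x by (auto simp: min_less_iff_disj of_nat_less_top)
    have F_ennreal: "ennreal (F x) = min (Lam x) (of_nat K)" for x
      unfolding F_def using fin[of x] by (simp add: ennreal_enn2real)
    have Fnn: "0 \<le> F x" for x by (simp add: F_def)
    have FK: "F x \<le> K" for x
    proof -
      have "enn2real (min (Lam x) (of_nat K)) \<le> enn2real (of_nat K :: ennreal)"
        by (rule enn2real_mono) (auto simp: of_nat_less_top)
      then show ?thesis by (simp add: F_def)
    qed
    have intF: "integrable M F" by (rule integrable_const_bound[of _ K]) (use Fnn FK in auto)
    have F_orb: "AE x in M. \<forall>k. F ((T^^k) x) = F x"
      using Lam_orb by eventually_elim (simp add: F_def)
    have main: "(\<integral>x. F x \<partial>M) \<le> (\<integral>x. h x \<partial>M)"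
    proof (rule field_le_epsilon)
      fix e :: real assume e: "0 < e"
      define B where "B L = {y\<in>space M. \<not> (\<exists>N\<in>{1..L}. N * (F y - e) \<le> S N y)}" for L :: nat
      have Bm[measurable]: "B L \<in> sets M" for L unfolding B_def by measurable
      have bound: "(\<integral>x. F x \<partial>M) \<le> (\<integral>x. h x \<partial>M) + e + K * measure M (B L) + L * K / n"
        if n: "1 \<le> n" for L n :: nat
      proof -
        have cov: "(\<integral>x. - S n x \<partial>M) \<le> n * (\<integral>x. e - F x \<partial>M) + n * (\<integral>x. indicator (B L) x * real K \<partial>M)
                 + L * (\<integral>x. real K \<partial>M)"
        proof (rule covering_integral[where u="\<lambda>n x. - S n x" and G="\<lambda>x. e - F x" and b="\<lambda>x. real K"
              and B="B L" and L=L, OF n])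
          show "integrable M (\<lambda>x. - S n x)" using intS by simp
          show "integrable M (\<lambda>x. e - F x)" using intF by simp
          show "integrable M (\<lambda>x. real K)" by simp
          show "0 \<le> real K" for x :: 'a by simp
          show "B L \<in> sets M" by simp
          show "AE x in M. \<forall>p q k. 1 \<le> p \<longrightarrow> 1 \<le> q \<longrightarrow>
              - S (p + q) ((T ^^ k) x) \<le> - S p ((T ^^ k) x) + - S q ((T ^^ (k + p)) x)"
          proof (intro AE_I2 allI impI)
            fix x p q k
            have "S (p + q) ((T ^^ k) x) = S p ((T ^^ k) x) + S q ((T ^^ (k + p)) x)"
              unfolding S_def sum_lessThan_add_split by (simp add: Tn_Tn ac_simps)
            then show "- S (p + q) ((T ^^ k) x) \<le> - S p ((T ^^ k) x) + - S q ((T ^^ (k + p)) x)" by simp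
          qed
          show "AE x in M. \<forall>k. - S 1 ((T ^^ k) x) \<le> e - F ((T ^^ k) x) + real K"
          proof (intro AE_I2 allI)
            fix x k
            show "- S 1 ((T ^^ k) x) \<le> e - F ((T ^^ k) x) + real K"
              using FK[of "(T ^^ k) x"] hnn[of "(T ^^ k) x"] e by (simp add: S_def)
          qed
          show "AE x in M. \<forall>k. (T ^^ k) x \<notin> B L \<longrightarrow>
              (\<exists>N. 1 \<le> N \<and> N \<le> L \<and> - S N ((T ^^ k) x) \<le> (\<Sum>i<N. e - F ((T ^^ (k + i)) x)))"
            using F_orb
          proof (rule AE_mp, intro AE_I2 impI allI)
            fix x k assume x: "x \<in> space M" and orb: "\<forall>k. F ((T ^^ k) x) = F x"
              and nB: "(T ^^ k) x \<notin> B L"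
            have "(T ^^ k) x \<in> space M" using x Tn_space by blast
            with nB obtain N where N: "1 \<le> N" "N \<le> L" "N * (F ((T ^^ k) x) - e) \<le> S N ((T ^^ k) x)"
              unfolding B_def by auto
            have "(\<Sum>i<N. e - F ((T ^^ (k + i)) x)) = N * (e - F x)" using orb by simp
            also have "\<dots> = - (N * (F ((T ^^ k) x) - e))" using orb by (simp add: algebra_simps)
            finally show "\<exists>N. 1 \<le> N \<and> N \<le> L \<and> - S N ((T ^^ k) x) \<le> (\<Sum>i<N. e - F ((T ^^ (k + i)) x))"
              using N by (intro exI[of _ N]) auto
          qed
        qed
        have i1: "(\<integral>x. - S n x \<partial>M) = - (n * (\<integral>x. h x \<partial>M))" using intSn by simp
        have i2: "(\<integral>x. e - F x \<partial>M) = e - (\<integral>x. F x \<partial>M)" using intF by (simp add: prob_space)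
        have i3: "(\<integral>x. indicator (B L) x * real K \<partial>M) = K * measure M (B L)" by simp
        have i4: "(\<integral>x. real K \<partial>M) = K" by (simp add: prob_space)
        from cov have "- (n * (\<integral>x. h x \<partial>M)) \<le> n * (e - (\<integral>x. F x \<partial>M)) + n * (K * measure M (B L)) + real L * real K"
          unfolding i1 i2 i3 i4 .
        then have "n * (\<integral>x. F x \<partial>M) \<le> n * ((\<integral>x. h x \<partial>M) + e + K * measure M (B L) + L * K / n)"
          using n by (simp add: algebra_simps)
        then show ?thesis using n by (simp add: mult_le_cancel_left_pos)
      qed
      have decB: "decseq B"
        unfolding decseq_def B_def by force
      have capB: "(\<Inter>L. B L) = {}"
      proof (rule ccontr)
        assume "(\<Inter>L. B L) \<noteq> {}"
        then obtain y where y: "\<And>L. y \<in> B L" by blast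
        then have ys: "y \<in> space M" unfolding B_def by auto
        have noN: "\<And>N. 1 \<le> N \<Longrightarrow> S N y < N * (F y - e)"
        proof -
          fix N :: nat assume "1 \<le> N"
          then have "N \<in> {1..N}" by simp
          then show "S N y < N * (F y - e)" using y[of N] unfolding B_def by (auto simp: not_le)
        qed
        have "F y - e \<ge> 0"
        proof (rule ccontr)
          assume "\<not> 0 \<le> F y - e"
          then have "S 1 y < 0" using noN[of 1] by simp
          then show False using Snn[of 1 y] by simp
        qed
        have "Lam y \<le> ennreal (F y - e)" unfolding Lam_def
        proof (rule Limsup_bounded, rule eventually_sequentiallyI[of 1])
          fix n :: nat assume n: "1 \<le> n"
          then have "S n y \<le> (F y - e) * n" using noN[of n] by (simp add: algebra_simps)
          then have "S n y / n \<le> F y - e" using n by (simp add: divide_le_eq)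
          then show "ennreal (S n y / n) \<le> ennreal (F y - e)" by (rule ennreal_leI)
        qed
        also have "\<dots> < ennreal (F y)" using e \<open>F y - e \<ge> 0\<close> by (simp add: ennreal_lessI)
        also have "\<dots> \<le> Lam y" using F_ennreal[of y] by simp
        finally show False by simp
      qed
      have limB: "(\<lambda>L. measure M (B L)) \<longlonglongrightarrow> 0"
      proof -
        have "range B \<subseteq> sets M" using Bm by auto
        from finite_Lim_measure_decseq[OF this decB] capB show ?thesis by simp
      qed
      have "(\<integral>x. F x \<partial>M) \<le> (\<integral>x. h x \<partial>M) + e + K * measure M (B L)" for L :: nat
      proof (rule LIMSEQ_le_const)
        show "(\<lambda>n. (\<integral>x. h x \<partial>M) + e + K * measure M (B L) + L * K / real n) \<longlonglongrightarrow> (\<integral>x. h x \<partial>M) + e + K * measure M (B L)"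
          using tendsto_add[OF tendsto_const lim_const_over_n[of "real (L * K)"], of "(\<integral>x. h x \<partial>M) + e + K * measure M (B L)"]
          by simp
        show "\<exists>N. \<forall>n\<ge>N. (\<integral>x. F x \<partial>M) \<le> (\<integral>x. h x \<partial>M) + e + K * measure M (B L) + L * K / real n"
          using bound by (intro exI[of _ 1]) auto
      qed
      then show "(\<integral>x. F x \<partial>M) \<le> (\<integral>x. h x \<partial>M) + e"
      proof (intro LIMSEQ_le_const[where X="\<lambda>L. (\<integral>x. h x \<partial>M) + e + K * measure M (B L)"])
        show "(\<lambda>L. (\<integral>x. h x \<partial>M) + e + K * measure M (B L)) \<longlonglongrightarrow> (\<integral>x. h x \<partial>M) + e"
          using tendsto_add[OF tendsto_const tendsto_mult[OF tendsto_const limB]] by simp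
      qed auto
    qed
    have "(\<integral>\<^sup>+x. min (Lam x) (of_nat K) \<partial>M) = (\<integral>\<^sup>+x. ennreal (F x) \<partial>M)"
      by (simp add: F_ennreal)
    also have "\<dots> = ennreal (\<integral>x. F x \<partial>M)"
      by (rule nn_integral_eq_integral[OF intF]) (simp add: Fnn)
    also have "\<dots> \<le> ennreal (\<integral>x. h x \<partial>M)" using main by (rule ennreal_leI)
    finally show ?thesis .
  qed
  have "(\<integral>\<^sup>+x. Lam x \<partial>M) = (\<integral>\<^sup>+x. (SUP K. min (Lam x) (of_nat K)) \<partial>M)"
  proof -
    have "(SUP K. min (Lam x) (of_nat K)) = Lam x" for x
    proof -
      have "(SUP K. min (Lam x) (of_nat K)) = min (Lam x) (SUP K. of_nat K)"
        by (simp add: inf_min[symmetric] inf_SUP)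
      also have "\<dots> = Lam x" by (simp add: ennreal_SUP_of_nat_eq_top)
      finally show ?thesis .
    qed
    then show ?thesis by simp
  qed
  also have "\<dots> = (SUP K. (\<integral>\<^sup>+x. min (Lam x) (of_nat K) \<partial>M))"
    by (rule nn_integral_monotone_convergence_SUP)
       (auto simp: incseq_def le_fun_def intro: min.coboundedI2)
  also have "\<dots> \<le> ennreal (\<integral>x. h x \<partial>M)" by (rule SUP_least) (rule trunc)
  finally show ?thesis unfolding Lam_def S_def .
qed


lemma card_less_real_le:
  fixes t :: real assumes "0 \<le> t"
  shows "card {q::nat. q < Q \<and> real q < t} \<le> t + 1"
proof -
  have "{q::nat. q < Q \<and> real q < t} \<subseteq> {..<nat \<lceil>t\<rceil>}"
  proof
    fix q assume "q \<in> {q::nat. q < Q \<and> real q < t}"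
    then have "real q < t" by simp
    then have "int q < \<lceil>t\<rceil>" by (simp add: less_ceiling_iff)
    then show "q \<in> {..<nat \<lceil>t\<rceil>}" by simp
  qed
  then have "card {q::nat. q < Q \<and> real q < t} \<le> card {..<nat \<lceil>t\<rceil>}" by (intro card_mono) auto
  also have "\<dots> = nat \<lceil>t\<rceil>" by simp
  finally have "real (card {q::nat. q < Q \<and> real q < t}) \<le> real (nat \<lceil>t\<rceil>)" by simp
  also have "\<dots> \<le> t + 1" using assms by linarith
  finally show ?thesis .
qed

lemma BC_orbit:
  fixes H :: "'a \<Rightarrow> real"
  assumes intH: "integrable M H" and Hnn: "\<And>x. 0 \<le> H x"
  shows "AE x in M. (\<lambda>q. H ((T^^q) x) / q) \<longlonglongrightarrow> 0"
proof -
  have Hm[measurable]: "H \<in> borel_measurable M" using intH by auto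
  have ev: "AE x in M. eventually (\<lambda>q. H ((T^^q) x) \<le> q / Suc r) sequentially" for r :: nat
  proof -
    define e :: real where "e = 1 / Suc r"
    have e: "0 < e" by (simp add: e_def)
    define A where "A q = (T^^q) -` {y\<in>space M. e * q < H y} \<inter> space M" for q
    have Am[measurable]: "A q \<in> sets M" for q unfolding A_def by measurable
    have setm: "{y\<in>space M. e * real k < H y} \<in> sets M" for k by measurable
    have mA: "measure M (A q) = measure M {y\<in>space M. e * q < H y}" for q
      unfolding A_def measure_def by (subst emeasure_Tn) auto
    have "summable (\<lambda>q. measure M (A q))"
    proof (rule bounded_imp_summable)
      show "0 \<le> measure M (A q)" for q by simp
      show "(\<Sum>k\<le>Q. measure M (A k)) \<le> (\<integral>x. H x / e + 1 \<partial>M)" for Q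
      proof -
        have "(\<Sum>k\<le>Q. measure M (A k)) = (\<Sum>k\<le>Q. (\<integral>x. indicator {y\<in>space M. e * k < H y} x \<partial>M))"
          by (simp add: mA)
        also have "\<dots> = (\<integral>x. (\<Sum>k\<le>Q. indicator {y\<in>space M. e * k < H y} x) \<partial>M)"
          by (rule Bochner_Integration.integral_sum[symmetric]) (auto intro!: integrable_real_indicator setm simp: less_top[symmetric])
        also have "\<dots> \<le> (\<integral>x. H x / e + 1 \<partial>M)"
        proof (rule integral_mono)
          show "integrable M (\<lambda>x. \<Sum>k\<le>Q. indicator {y \<in> space M. e * real k < H y} x :: real)"
            by (intro Bochner_Integration.integrable_sum) (auto intro!: integrable_real_indicator setm simp: less_top[symmetric])
          show "integrable M (\<lambda>x. H x / e + 1)" using intH by auto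
          fix x assume x: "x \<in> space M"
          have "(\<Sum>k\<le>Q. indicator {y \<in> space M. e * real k < H y} x :: real)
               = (\<Sum>k\<in>{..Q}. if real k < H x / e then 1 else 0)"
            using x e by (intro sum.cong) (auto simp: indicator_def field_simps)
          also have "\<dots> = (\<Sum>k\<in>{..<Suc Q}. if real k < H x / e then 1 else 0)"
            by (simp only: lessThan_Suc_atMost)
          also have "\<dots> = (\<Sum>k\<in>{k\<in>{..<Suc Q}. real k < H x / e}. 1)"
            by (rule sum.inter_filter[symmetric]) simp
          also have "{k\<in>{..<Suc Q}. real k < H x / e} = {k. k < Suc Q \<and> real k < H x / e}" by auto
          also have "(\<Sum>k\<in>{k. k < Suc Q \<and> real k < H x / e}. 1) = real (card {k. k < Suc Q \<and> real k < H x / e})"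
            by simp
          also have "\<dots> \<le> H x / e + 1"
            by (rule card_less_real_le) (use Hnn e in simp)
          finally show "(\<Sum>k\<le>Q. indicator {y \<in> space M. e * real k < H y} x) \<le> H x / e + 1" .
        qed
        finally show ?thesis .
      qed
    qed
    then have "AE x in M. eventually (\<lambda>q. x \<in> space M - A q) sequentially"
      by (intro borel_cantelli_AE1) (auto simp: emeasure_eq_measure)
    then show ?thesis
    proof (rule AE_mp, intro AE_I2 impI)
      fix x assume x: "x \<in> space M" and evx: "eventually (\<lambda>q. x \<in> space M - A q) sequentially"
      show "eventually (\<lambda>q. H ((T^^q) x) \<le> q / Suc r) sequentially"
        using evx
      proof eventually_elim
        case (elim q)
        then have "\<not> e * q < H ((T^^q) x)" using x Tn_space[OF x, of q] by (auto simp: A_def)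
        then show ?case by (simp add: e_def)
      qed
    qed
  qed
  then have "AE x in M. \<forall>r::nat. eventually (\<lambda>q. H ((T^^q) x) \<le> q / Suc r) sequentially"
    by (simp add: AE_all_countable)
  then show ?thesis
  proof (rule AE_mp, intro AE_I2 impI)
    fix x assume H: "\<forall>r::nat. eventually (\<lambda>q. H ((T^^q) x) \<le> q / Suc r) sequentially"
    show "(\<lambda>q. H ((T^^q) x) / q) \<longlonglongrightarrow> 0"
    proof (rule LIMSEQ_I)
      fix d :: real assume d: "0 < d"
      obtain r :: nat where r: "1 / Suc r < d"
        using d by (metis nat_approx_posE of_nat_Suc)
      from H[rule_format, of r] obtain Q where Q: "\<And>q. Q \<le> q \<Longrightarrow> H ((T^^q) x) \<le> q / Suc r"
        by (auto simp: eventually_sequentially)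
      show "\<exists>no. \<forall>q\<ge>no. norm (H ((T ^^ q) x) / real q - 0) < d"
      proof (intro exI[of _ "Suc Q"] allI impI)
        fix q assume q: "Suc Q \<le> q"
        then have "H ((T^^q) x) / q \<le> (q / Suc r) / q"
          using Q[of q] by (intro divide_right_mono) auto
        also have "\<dots> = 1 / Suc r" using q by simp
        finally show "norm (H ((T ^^ q) x) / real q - 0) < d" using Hnn[of "(T^^q) x"] r by simp
      qed
    qed
  qed
qed

end

lemma limsup_div_le:
  fixes a :: "nat \<Rightarrow> 'b::complete_linorder"
  assumes m: "1 \<le> m"
  shows "limsup (\<lambda>n. a (n div m)) \<le> limsup a"
proof -
  have "eventually (\<lambda>n. a (n div m) < y) sequentially" if y: "limsup a < y" for y
  proof -
    from Limsup_lessD[OF y] obtain Q where Q: "\<And>q. Q \<le> q \<Longrightarrow> a q < y"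
      by (auto simp: eventually_sequentially)
    show ?thesis unfolding eventually_sequentially
    proof (intro exI[of _ "Q * m"] allI impI)
      fix n assume "Q * m \<le> n"
      then have "Q \<le> n div m" using m by (simp add: less_eq_div_iff_mult_less_eq)
      then show "a (n div m) < y" by (rule Q)
    qed
  qed
  then show ?thesis by (subst Limsup_le_iff) auto
qed

lemma AE_eq_of_nn_integral_le:
  fixes f g :: "'a \<Rightarrow> ennreal"
  assumes [measurable]: "f \<in> borel_measurable M" "g \<in> borel_measurable M"
    and le: "AE x in M. f x \<le> g x" and int: "(\<integral>\<^sup>+x. g x \<partial>M) \<le> (\<integral>\<^sup>+x. f x \<partial>M)"
    and fin: "(\<integral>\<^sup>+x. g x \<partial>M) < \<infinity>"
  shows "AE x in M. g x = f x"
proof -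
  have finf: "(\<integral>\<^sup>+x. f x \<partial>M) \<noteq> \<infinity>"
    using nn_integral_mono_AE[OF le] fin by auto
  have "(\<integral>\<^sup>+x. g x - f x \<partial>M) = (\<integral>\<^sup>+x. g x \<partial>M) - (\<integral>\<^sup>+x. f x \<partial>M)"
    by (rule nn_integral_diff) (use finf le in auto)
  also have "\<dots> = 0" using int nn_integral_mono_AE[OF le] fin by (auto simp: diff_eq_0_iff_ennreal)
  finally have "AE x in M. g x - f x = 0" by (subst (asm) nn_integral_0_iff_AE) auto
  moreover have "AE x in M. g x < \<infinity>" using nn_integral_PInf_AE[of g M] fin by (auto simp: top.not_eq_extremum)
  ultimately show ?thesis using le by eventually_elim (auto simp: diff_eq_0_iff_ennreal)
qed


context mpt
begin

theorem kingman:
  fixes g :: "nat \<Rightarrow> 'a \<Rightarrow> real"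
  assumes gm[measurable]: "\<And>n. g n \<in> borel_measurable M"
    and gnn: "\<And>n x. 0 \<le> g n x"
    and int1: "integrable M (g 1)"
    and sub: "AE x in M. \<forall>p q. g (p+q) x \<le> g p x + g q ((T^^p) x)"
  shows "AE x in M. convergent (\<lambda>n. g n x / n)"
proof -
  have subO: "AE x in M. \<forall>k p q. g (p+q) ((T^^k) x) \<le> g p ((T^^k) x) + g q ((T^^(k+p)) x)"
  proof -
    have "AE x in M. \<forall>k. \<forall>p q. g (p+q) ((T^^k) x) \<le> g p ((T^^k) x) + g q ((T^^p) ((T^^k) x))"
      by (rule AE_orbit[OF sub])
    then show ?thesis by (simp add: Tn_Tn add.commute)
  qed
  have sumbound: "AE x in M. \<forall>k s. 1 \<le> s \<longrightarrow> g s ((T^^k) x) \<le> (\<Sum>i<s. g 1 ((T^^(k+i)) x))"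
    using subO
  proof (rule AE_mp, intro AE_I2 impI allI)
    fix x and k s :: nat assume H: "\<forall>k p q. g (p+q) ((T^^k) x) \<le> g p ((T^^k) x) + g q ((T^^(k+p)) x)"
      and s1: "1 \<le> s"
    have "1 \<le> s \<longrightarrow> g s ((T^^k) x) \<le> (\<Sum>i<s. g 1 ((T^^(k+i)) x))"
    proof (induction s)
      case 0 then show ?case by simp
    next
      case (Suc s)
      show ?case
      proof (cases "s = 0")
        case True then show ?thesis by simp
      next
        case False
        have "g (s + 1) ((T^^k) x) \<le> g s ((T^^k) x) + g 1 ((T^^(k+s)) x)" using H by blast
        then show ?thesis using Suc False by simp
      qed
    qed
    then show "g s ((T^^k) x) \<le> (\<Sum>i<s. g 1 ((T^^(k+i)) x))" using s1 by simp
  qed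
  have intg: "integrable M (g n)" if n: "1 \<le> n" for n
  proof (rule Bochner_Integration.integrable_bound[of _ "\<lambda>x. \<Sum>i<n. g 1 ((T^^i) x)"])
    show "integrable M (\<lambda>x. \<Sum>i<n. g 1 ((T^^i) x))"
      by (intro Bochner_Integration.integrable_sum integrable_Tn int1)
    show "g n \<in> borel_measurable M" by simp
    show "AE x in M. norm (g n x) \<le> norm (\<Sum>i<n. g 1 ((T^^i) x))"
      using sumbound
    proof eventually_elim
      case (elim x)
      then have "g n ((T^^0) x) \<le> (\<Sum>i<n. g 1 ((T^^(0+i)) x))" using n by blast
      then show ?case using gnn by (simp add: sum_nonneg)
    qed
  qed

  define fs where "fs x = limsup (\<lambda>n. ennreal (g n x / n))" for x
  define fi where "fi x = liminf (\<lambda>n. ennreal (g n x / n))" for x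
  have fsm[measurable]: "fs \<in> borel_measurable M" unfolding fs_def by measurable
  have fim[measurable]: "fi \<in> borel_measurable M" unfolding fi_def by measurable
  have fi_le_fs: "fi x \<le> fs x" for x unfolding fi_def fs_def by (rule Liminf_le_Limsup) simp

  have upper: "(\<integral>\<^sup>+x. fs x \<partial>M) \<le> ennreal ((\<integral>x. g m x \<partial>M) / m)" if m: "1 \<le> m" for m
  proof -
    interpret S: mpt M "T^^m" by (rule mpt_power)
    define H where "H y = (\<Sum>i<m. g 1 ((T^^i) y))" for y
    have intH: "integrable M H" unfolding H_def
      by (intro Bochner_Integration.integrable_sum integrable_Tn int1)
    have Hnn: "0 \<le> H y" for y unfolding H_def by (simp add: sum_nonneg gnn)
    have BC: "AE x in M. (\<lambda>q. H (((T^^m)^^q) x) / q) \<longlonglongrightarrow> 0" by (rule S.BC_orbit[OF intH Hnn])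
    define hm where "hm y = g m y / m" for y
    have inthm: "integrable M hm" unfolding hm_def using intg[OF m] by simp
    have hmnn: "0 \<le> hm y" for y unfolding hm_def by (simp add: gnn)
    define P where "P x q = ennreal ((\<Sum>k<q. hm (((T^^m)^^k) x)) / q)" for x q
    have BH: "(\<integral>\<^sup>+x. limsup (P x) \<partial>M) \<le> ennreal (\<integral>x. hm x \<partial>M)"
      unfolding P_def by (rule S.birkhoff_half[OF inthm hmnn])
    have Tmq: "((T^^m)^^q) x = (T^^(q*m)) x" for q x by (simp add: funpow_mult mult.commute)
    have blocks: "AE x in M. \<forall>q. 1 \<le> q \<longrightarrow> g (q*m) x \<le> (\<Sum>j<q. g m (((T^^m)^^j) x))"
      using subO
    proof (rule AE_mp, intro AE_I2 impI allI)
      fix x and q :: nat assume H: "\<forall>k p q. g (p+q) ((T^^k) x) \<le> g p ((T^^k) x) + g q ((T^^(k+p)) x)"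
        and q1: "1 \<le> q"
      have "1 \<le> q \<longrightarrow> g (q*m) x \<le> (\<Sum>j<q. g m (((T^^m)^^j) x))"
      proof (induction q)
        case 0 show ?case by simp
      next
        case (Suc q)
        show ?case
        proof (cases "q = 0")
          case True then show ?thesis by simp
        next
          case False
          have "g (q*m + m) ((T^^0) x) \<le> g (q*m) ((T^^0) x) + g m ((T^^(0 + q*m)) x)" using H by blast
          then show ?thesis using Suc False Tmq[of q x] by (simp add: add.commute)
        qed
      qed
      then show "g (q*m) x \<le> (\<Sum>j<q. g m (((T^^m)^^j) x))" using q1 by simp
    qed
    have ptw: "AE x in M. fs x \<le> limsup (P x)"
      using blocks BC sumbound subO
    proof eventually_elim
      case (elim x)
      show "fs x \<le> limsup (P x)"
      proof (rule ennreal_le_epsilon)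
        fix e :: real assume e: "0 < e"
        from order_tendstoD(2)[OF elim(2) e]
        obtain Q where Q: "\<And>q. Q \<le> q \<Longrightarrow> H (((T^^m)^^q) x) / q < e"
          by (auto simp: eventually_sequentially)
        have ev: "eventually (\<lambda>n. ennreal (g n x / n) \<le> ennreal e + P x (n div m)) sequentially"
          unfolding eventually_sequentially
        proof (intro exI[of _ "(Q+1)*m"] allI impI)
          fix n assume n: "(Q+1)*m \<le> n"
          define q where "q = n div m"
          define s where "s = n mod m"
          have nqs: "n = q*m + s" by (simp add: q_def s_def)
          have q1: "Q+1 \<le> q" using n m by (simp add: q_def less_eq_div_iff_mult_less_eq)
          have sm: "s < m" using m by (simp add: s_def)
          have gn: "g n x \<le> (\<Sum>j<q. g m (((T^^m)^^j) x)) + H (((T^^m)^^q) x)"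
          proof (cases "s = 0")
            case True
            then have "g n x = g (q*m) x" using nqs by simp
            also have "\<dots> \<le> (\<Sum>j<q. g m (((T^^m)^^j) x))" using elim(1) q1 by auto
            also have "\<dots> \<le> (\<Sum>j<q. g m (((T^^m)^^j) x)) + H (((T^^m)^^q) x)" using Hnn by simp
            finally show ?thesis .
          next
            case False
            have "g n x = g (q*m + s) ((T^^0) x)" using nqs by simp
            also have "\<dots> \<le> g (q*m) ((T^^0) x) + g s ((T^^(0 + q*m)) x)" using elim(4) by blast
            also have "g s ((T^^(0+q*m)) x) \<le> (\<Sum>i<s. g 1 ((T^^(q*m+i)) x))"
              using elim(3) False by auto
            also have "\<dots> \<le> (\<Sum>i<m. g 1 ((T^^(q*m+i)) x))"
              by (rule sum_mono2) (use sm gnn in auto)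
            also have "\<dots> = H (((T^^m)^^q) x)" unfolding H_def Tmq by (simp add: Tn_Tn add.commute)
            also have "g (q*m) ((T^^0) x) \<le> (\<Sum>j<q. g m (((T^^m)^^j) x))" using elim(1) q1 by auto
            finally show ?thesis by simp
          qed
          have qpos: "0 < q" using q1 by simp
          have nqm: "real q * real m \<le> real n" using nqs by (simp flip: of_nat_mult)
          have nq: "real q \<le> real n" using nqm m qpos
            by (metis mult.right_neutral mult_left_mono of_nat_0_le_iff of_nat_1 of_nat_le_iff order_trans)
          define Sg where "Sg = (\<Sum>j<q. g m (((T^^m)^^j) x))"
          have Sgnn: "0 \<le> Sg" unfolding Sg_def by (simp add: sum_nonneg gnn)
          have "g n x / n \<le> Sg / n + H (((T^^m)^^q) x) / n"
            using gn by (simp add: add_divide_distrib[symmetric] divide_right_mono Sg_def)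
          also have "Sg / n \<le> Sg / (real q * real m)"
          proof (rule divide_left_mono)
            have qm: "0 < real q * real m" using qpos m by simp
            then show "0 < real n * (real q * real m)" using nqm by (simp add: mult_pos_pos)
          qed (use Sgnn nqm in auto)
          also have "Sg / (real q * real m) = (\<Sum>k<q. hm (((T^^m)^^k) x)) / q"
            unfolding Sg_def hm_def by (simp add: sum_divide_distrib[symmetric] field_simps)
          also have "H (((T^^m)^^q) x) / n \<le> H (((T^^m)^^q) x) / q"
          proof (rule divide_left_mono)
            show "0 < real n * real q" using qpos nq by (simp add: mult_pos_pos)
          qed (use Hnn nq in auto)
          also have "H (((T^^m)^^q) x) / q < e" using Q q1 by simp
          finally have "g n x / n \<le> e + (\<Sum>k<q. hm (((T^^m)^^k) x)) / q" by simp
          then have "ennreal (g n x / n) \<le> ennreal (e + (\<Sum>k<q. hm (((T^^m)^^k) x)) / q)"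
            by (rule ennreal_leI)
          also have "\<dots> = ennreal e + P x q" unfolding P_def
            using e by (intro ennreal_plus) (auto intro!: divide_nonneg_nonneg sum_nonneg hmnn)
          finally show "ennreal (g n x / n) \<le> ennreal e + P x (n div m)" by (simp add: q_def)
        qed
        have "fs x \<le> limsup (\<lambda>n. ennreal e + P x (n div m))" unfolding fs_def by (rule Limsup_mono[OF ev])
        also have "\<dots> = ennreal e + limsup (\<lambda>n. P x (n div m))" by (rule Limsup_const_add) simp
        also have "\<dots> \<le> ennreal e + limsup (P x)" by (intro add_left_mono limsup_div_le[OF m])
        finally show "fs x \<le> limsup (P x) + ennreal e" by (simp add: add.commute)
      qed
    qed
    have "(\<integral>\<^sup>+x. fs x \<partial>M) \<le> (\<integral>\<^sup>+x. limsup (P x) \<partial>M)" by (rule nn_integral_mono_AE[OF ptw])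
    also have "\<dots> \<le> ennreal (\<integral>x. hm x \<partial>M)" by (rule BH)
    also have "(\<integral>x. hm x \<partial>M) = (\<integral>x. g m x \<partial>M) / m" unfolding hm_def by simp
    finally show ?thesis .
  qed
  have fs_fin: "(\<integral>\<^sup>+x. fs x \<partial>M) < \<infinity>"
    using upper[of 1] by (simp add: le_less_trans)
  have fi_fin: "(\<integral>\<^sup>+x. fi x \<partial>M) < \<infinity>"
    using fs_fin nn_integral_mono[of M fi fs] fi_le_fs by (simp add: le_less_trans)
  have fi_AEfin: "AE x in M. fi x < \<infinity>"
    using nn_integral_PInf_AE[of fi M] fi_fin by (auto simp: top.not_eq_extremum)
  have fs_AEfin: "AE x in M. fs x < \<infinity>"
    using nn_integral_PInf_AE[of fs M] fs_fin by (auto simp: top.not_eq_extremum)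

  have fi_le: "AE x in M. fi x \<le> fi (T x)"
    using sub
  proof eventually_elim
    case (elim x)
    show "fi x \<le> fi (T x)"
    proof (rule ennreal_le_epsilon)
      fix e :: real assume e: "0 < e"
      have ev: "eventually (\<lambda>n. g 1 x / real (Suc n) \<le> e) sequentially"
      proof -
        have "(\<lambda>n. g 1 x / real (Suc n)) \<longlonglongrightarrow> 0"
          using LIMSEQ_Suc[OF lim_const_over_n[of "g 1 x"]] by simp
        from order_tendstoD(2)[OF this e] show ?thesis by (rule eventually_mono) simp
      qed
      have "eventually (\<lambda>n. ennreal (g (Suc n) x / real (Suc n)) \<le> ennreal e + ennreal (g n (T x) / n)) sequentially"
        using ev eventually_ge_at_top[of "1::nat"]
      proof eventually_elim
        case (elim n)
        have "g (1 + n) x \<le> g 1 x + g n ((T^^1) x)" using \<open>\<forall>p q. _\<close> by blast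
        then have "g (Suc n) x \<le> g 1 x + g n (T x)" by simp
        then have "g (Suc n) x / real (Suc n) \<le> (g 1 x + g n (T x)) / real (Suc n)"
          by (rule divide_right_mono) simp
        also have "\<dots> = g 1 x / real (Suc n) + g n (T x) / real (Suc n)" by (simp add: add_divide_distrib)
        also have "g n (T x) / real (Suc n) \<le> g n (T x) / n"
          using elim(2) by (intro divide_left_mono) (auto simp: gnn)
        finally have "g (Suc n) x / real (Suc n) \<le> e + g n (T x) / n" using elim(1) by linarith
        then have "ennreal (g (Suc n) x / real (Suc n)) \<le> ennreal (e + g n (T x) / n)" by (rule ennreal_leI)
        also have "\<dots> = ennreal e + ennreal (g n (T x) / n)"
          using e by (intro ennreal_plus) (auto simp: gnn)
        finally show ?case .
      qed
      then have "liminf (\<lambda>n. ennreal (g (Suc n) x / real (Suc n))) \<le> liminf (\<lambda>n. ennreal e + ennreal (g n (T x) / n))"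
        by (rule Liminf_mono)
      also have "\<dots> = ennreal e + fi (T x)" unfolding fi_def
        by (rule Liminf_const_add) simp
      also have "liminf (\<lambda>n. ennreal (g (Suc n) x / real (Suc n))) = fi x"
        unfolding fi_def using liminf_shift[of "\<lambda>n. ennreal (g n x / real n)"] by simp
      finally show "fi x \<le> fi (T x) + ennreal e" by (simp add: add.commute)
    qed
  qed
  have fi_orb: "AE x in M. \<forall>k. fi ((T^^k) x) = fi x"
    by (rule invariant_orbit[OF invariant_ennreal[OF fim fi_le]])

  have lower: "(\<integral>\<^sup>+x. fs x \<partial>M) \<le> (\<integral>\<^sup>+x. fi x \<partial>M)"
  proof (rule ennreal_le_epsilon)
    fix d :: real assume d: "0 < d"
    define e where "e = d / 3"
    have e: "0 < e" using d by (simp add: e_def)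
    define B where "B j = {y\<in>space M. \<not> (fi y \<le> of_nat j \<and> (\<exists>N\<in>{1..j}. g N y \<le> N * (enn2real (fi y) + e)))}"
      for j :: nat
    have Bm[measurable]: "B j \<in> sets M" for j unfolding B_def by measurable
    define F where "F j y = (if fi y \<le> of_nat j then enn2real (fi y) else 0)" for j :: nat and y
    have Fm[measurable]: "F j \<in> borel_measurable M" for j unfolding F_def by measurable
    have Fnn: "0 \<le> F j y" for j y by (simp add: F_def)
    have FK: "F j y \<le> j" for j y
    proof (cases "fi y \<le> of_nat j")
      case True
      then have "enn2real (fi y) \<le> enn2real (of_nat j :: ennreal)"
        by (rule enn2real_mono) (simp add: of_nat_less_top)
      then show ?thesis using True by (simp add: F_def)
    qed (simp add: F_def)
    have intF: "integrable M (F j)" for j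
      by (rule integrable_const_bound[of _ j]) (use Fnn FK in auto)
    have F_le: "ennreal (F j y) \<le> fi y" for j y
    proof (cases "fi y \<le> of_nat j")
      case True
      then have "fi y < top" using of_nat_less_top le_less_trans by blast
      then show ?thesis using True by (simp add: F_def ennreal_enn2real)
    qed (simp add: F_def)
    have intFle: "(\<integral>x. F j x \<partial>M) \<le> enn2real (\<integral>\<^sup>+x. fi x \<partial>M)" for j
    proof -
      have "ennreal (\<integral>x. F j x \<partial>M) = (\<integral>\<^sup>+x. ennreal (F j x) \<partial>M)"
        by (rule nn_integral_eq_integral[OF intF, symmetric]) (simp add: Fnn)
      also have "\<dots> \<le> (\<integral>\<^sup>+x. fi x \<partial>M)" by (intro nn_integral_mono F_le)
      finally have "ennreal (\<integral>x. F j x \<partial>M) \<le> (\<integral>\<^sup>+x. fi x \<partial>M)" .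
      then have "enn2real (ennreal (\<integral>x. F j x \<partial>M)) \<le> enn2real (\<integral>\<^sup>+x. fi x \<partial>M)"
        using fi_fin by (intro enn2real_mono) auto
      moreover have "0 \<le> (\<integral>x. F j x \<partial>M)" by (simp add: Fnn)
      ultimately show ?thesis by simp
    qed
    have limB: "(\<lambda>j. \<integral>x. indicator (B j) x * g 1 x \<partial>M) \<longlonglongrightarrow> 0"
    proof -
      have "(\<lambda>j. \<integral>x. indicator (B j) x * g 1 x \<partial>M) \<longlonglongrightarrow> (\<integral>x. 0 \<partial>M)"
      proof (rule integral_dominated_convergence[where w="g 1"])
        show "(\<lambda>x. 0::real) \<in> borel_measurable M" by simp
        show "(\<lambda>x. indicator (B j) x * g 1 x) \<in> borel_measurable M" for j by measurable
        show "integrable M (g 1)" by (rule int1)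
        show "AE x in M. norm (indicator (B j) x * g 1 x) \<le> g 1 x" for j
          using gnn by (intro AE_I2) (auto simp: indicator_def)
        show "AE x in M. (\<lambda>j. indicator (B j) x * g 1 x) \<longlonglongrightarrow> 0"
          using fi_AEfin
        proof (rule AE_mp, intro AE_I2 impI)
          fix x assume x: "x \<in> space M" and fin: "fi x < \<infinity>"
          define c where "c = enn2real (fi x) + e"
          have fic: "fi x = ennreal (enn2real (fi x))" using fin by (simp add: ennreal_enn2real)
          have "\<exists>N. 1 \<le> N \<and> ennreal (g N x / N) < ennreal c"
          proof (rule ccontr)
            assume "\<not> ?thesis"
            then have "eventually (\<lambda>N. ennreal c \<le> ennreal (g N x / N)) sequentially"
              unfolding eventually_sequentially by (auto simp: not_less)
            then have "ennreal c \<le> fi x" unfolding fi_def by (rule Liminf_bounded)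
            moreover have "fi x < ennreal c" using e fic
              by (metis c_def enn2real_nonneg ennreal_lessI less_add_same_cancel1 order_le_less_trans)
            ultimately show False by simp
          qed
          then obtain N where N: "1 \<le> N" "ennreal (g N x / N) < ennreal c" by blast
          then have "g N x / N < c" by (simp add: ennreal_less_iff gnn)
          then have gN: "g N x \<le> N * (enn2real (fi x) + e)" using N(1)
            by (simp add: c_def divide_less_eq mult.commute)
          obtain J :: nat where J0: "enn2real (fi x) \<le> real J" using real_arch_simple by blast
          have J: "fi x \<le> of_nat J"
          proof -
            have "fi x = ennreal (enn2real (fi x))" by (rule fic)
            also have "\<dots> \<le> ennreal (real J)" using J0 by (rule ennreal_leI)
            also have "\<dots> = of_nat J" by (simp add: ennreal_of_nat_eq_real_of_nat)
            finally show ?thesis .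
          qed
          have "eventually (\<lambda>j. indicator (B j) x * g 1 x = (0::real)) sequentially"
            unfolding eventually_sequentially
          proof (intro exI[of _ "max N J"] allI impI)
            fix j assume j: "max N J \<le> j"
            then have "fi x \<le> of_nat j" using J by (meson max.boundedE of_nat_le_iff order_trans)
            moreover have "N \<in> {1..j}" using j N(1) by auto
            ultimately have "x \<notin> B j" using gN unfolding B_def by auto
            then show "indicator (B j) x * g 1 x = 0" by simp
          qed
          then show "(\<lambda>j. indicator (B j) x * g 1 x) \<longlonglongrightarrow> 0"
            by (rule tendsto_eventually)
        qed
      qed
      then show ?thesis by simp
    qed
    from order_tendstoD(2)[OF limB e] obtain j where
      j: "(\<integral>x. indicator (B j) x * g 1 x \<partial>M) < e"
      by (auto simp: eventually_sequentially)
    have "eventually (\<lambda>n. real j * (\<integral>x. g 1 x \<partial>M) / real n < e) sequentially"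
      using order_tendstoD(2)[OF lim_const_over_n e] .
    then obtain n where n: "1 \<le> n" "real j * (\<integral>x. g 1 x \<partial>M) / real n < e"
      by (metis (no_types, lifting) eventually_at_top_linorder le_add2 max.cobounded1 max.cobounded2 order_trans)
    have cov: "(\<integral>x. g n x \<partial>M) \<le> n * (\<integral>x. F j x + e \<partial>M) + n * (\<integral>x. indicator (B j) x * g 1 x \<partial>M)
        + j * (\<integral>x. g 1 x \<partial>M)"
    proof (rule covering_integral[where u=g and G="\<lambda>x. F j x + e" and b="g 1" and B="B j" and L=j, OF n(1)])
      show "integrable M (g n)" by (rule intg[OF n(1)])
      show "integrable M (\<lambda>x. F j x + e)" using intF by simp
      show "integrable M (g 1)" by (rule int1)
      show "0 \<le> g 1 x" for x by (rule gnn)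
      show "B j \<in> sets M" by simp
      show "AE x in M. \<forall>p q k. 1 \<le> p \<longrightarrow> 1 \<le> q \<longrightarrow>
          g (p + q) ((T ^^ k) x) \<le> g p ((T ^^ k) x) + g q ((T ^^ (k + p)) x)"
        using subO by eventually_elim blast
      show "AE x in M. \<forall>k. g 1 ((T ^^ k) x) \<le> F j ((T ^^ k) x) + e + g 1 ((T ^^ k) x)"
        using Fnn e by (intro AE_I2) (auto intro: add_nonneg_nonneg)
      show "AE x in M. \<forall>k. (T ^^ k) x \<notin> B j \<longrightarrow>
          (\<exists>N. 1 \<le> N \<and> N \<le> j \<and> g N ((T ^^ k) x) \<le> (\<Sum>i<N. F j ((T ^^ (k + i)) x) + e))"
        using fi_orb
      proof (rule AE_mp, intro AE_I2 impI allI)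
        fix x k assume x: "x \<in> space M" and orb: "\<forall>k. fi ((T ^^ k) x) = fi x"
          and nB: "(T ^^ k) x \<notin> B j"
        have "(T ^^ k) x \<in> space M" using x Tn_space by blast
        with nB have fij: "fi x \<le> of_nat j"
          and exN: "\<exists>N\<in>{1..j}. g N ((T ^^ k) x) \<le> N * (enn2real (fi x) + e)"
          unfolding B_def using orb by auto
        from exN obtain N where N: "N \<in> {1..j}" "g N ((T ^^ k) x) \<le> N * (enn2real (fi x) + e)" by blast
        have "(\<Sum>i<N. F j ((T ^^ (k + i)) x) + e) = N * (enn2real (fi x) + e)"
          using orb fij by (simp add: F_def)
        then show "\<exists>N. 1 \<le> N \<and> N \<le> j \<and> g N ((T ^^ k) x) \<le> (\<Sum>i<N. F j ((T ^^ (k + i)) x) + e)"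
          using N by (intro exI[of _ N]) auto
      qed
    qed
    have "(\<integral>x. F j x + e \<partial>M) = (\<integral>x. F j x \<partial>M) + e" using intF by (simp add: prob_space)
    with cov have "(\<integral>x. g n x \<partial>M) \<le> n * ((\<integral>x. F j x \<partial>M) + e + (\<integral>x. indicator (B j) x * g 1 x \<partial>M)
        + j * (\<integral>x. g 1 x \<partial>M) / n)"
      using n(1) by (simp add: algebra_simps)
    then have gnb: "(\<integral>x. g n x \<partial>M) / n \<le> (\<integral>x. F j x \<partial>M) + e + (\<integral>x. indicator (B j) x * g 1 x \<partial>M)
        + j * (\<integral>x. g 1 x \<partial>M) / n"
      using n(1) by (simp add: divide_le_eq mult.commute)
    also have "\<dots> \<le> enn2real (\<integral>\<^sup>+x. fi x \<partial>M) + d"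
      using intFle[of j] j n(2) e_def by linarith
    finally have "(\<integral>x. g n x \<partial>M) / n \<le> enn2real (\<integral>\<^sup>+x. fi x \<partial>M) + d" .
    then have "ennreal ((\<integral>x. g n x \<partial>M) / n) \<le> ennreal (enn2real (\<integral>\<^sup>+x. fi x \<partial>M) + d)"
      by (rule ennreal_leI)
    also have "\<dots> = (\<integral>\<^sup>+x. fi x \<partial>M) + ennreal d"
      using fi_fin d by (simp add: ennreal_plus ennreal_enn2real)
    finally show "(\<integral>\<^sup>+x. fs x \<partial>M) \<le> (\<integral>\<^sup>+x. fi x \<partial>M) + ennreal d"
      using upper[OF n(1)] by (rule order_trans[rotated])
  qed

  have AEeq: "AE x in M. fs x = fi x"
    by (rule AE_eq_of_nn_integral_le[OF fim fsm AE_I2[OF fi_le_fs] lower fs_fin])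
  show ?thesis
    using AEeq fs_AEfin
  proof eventually_elim
    case (elim x)
    have "(\<lambda>n. ennreal (g n x / n)) \<longlonglongrightarrow> fs x"
      by (rule Liminf_eq_Limsup) (use elim in \<open>auto simp: fs_def fi_def\<close>)
    then have "(\<lambda>n. ennreal (g n x / n)) \<longlonglongrightarrow> ennreal (enn2real (fs x))"
      using elim by (simp add: ennreal_enn2real)
    then have "(\<lambda>n. enn2real (ennreal (g n x / n))) \<longlonglongrightarrow> enn2real (fs x)"
      by (rule tendsto_enn2real) simp
    then have "(\<lambda>n. g n x / n) \<longlonglongrightarrow> enn2real (fs x)" by (simp add: gnn)
    then show "convergent (\<lambda>n. g n x / n)" by (rule convergentI)
  qed
qed

end

context mpt
begin

lemma dirA:
  fixes a b :: "nat \<Rightarrow> 'a \<Rightarrow> real" and Phi Psi :: "'a \<Rightarrow> real"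
  assumes Phim[measurable]: "Phi \<in> borel_measurable M"
    and bnd: "AE y in M. \<forall>n. b n y \<le> a n y + Psi y + Phi ((T^^n) y)"
    and ca: "AE y in M. convergent (\<lambda>n. a n y / n)"
    and cb: "AE y in M. convergent (\<lambda>n. b n y / n)"
  shows "AE y in M. lim (\<lambda>n. b n y / n) \<le> lim (\<lambda>n. a n y / n)"
proof -
  have freq: "AE y in M. \<not> (\<exists>N. \<forall>n\<ge>N. real n / Suc r \<le> Phi ((T^^n) y))" for r :: nat
  proof -
    define Y where "Y N = {y\<in>space M. \<forall>n\<ge>N. real n / Suc r \<le> Phi ((T^^n) y)}" for N
    define A where "A n = {z\<in>space M. real n / Suc r \<le> Phi z}" for n
    have Ym[measurable]: "Y N \<in> sets M" for N unfolding Y_def by measurable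
    have Am[measurable]: "A n \<in> sets M" for n unfolding A_def by measurable
    have decA: "decseq A"
    proof (unfold decseq_def A_def, safe)
      fix m n :: nat and x assume "m \<le> n" "real n / Suc r \<le> Phi x"
      moreover have "real m / Suc r \<le> real n / Suc r" using \<open>m \<le> n\<close> by (simp add: divide_right_mono)
      ultimately show "real m / Suc r \<le> Phi x" by linarith
    qed
    have capA: "(\<Inter>n. A n) = {}"
    proof (rule ccontr)
      assume "(\<Inter>n. A n) \<noteq> {}"
      then obtain z where z: "\<And>n. z \<in> A n" by blast
      obtain n :: nat where n: "(Phi z + 1) * Suc r < n" using reals_Archimedean2 by blast
      have "real n / Suc r \<le> Phi z" using z[of n] by (simp add: A_def)
      then have "real n \<le> Phi z * Suc r" by (simp add: divide_le_eq)
      with n show False by (simp add: algebra_simps)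
    qed
    have limA: "(\<lambda>n. measure M (A n)) \<longlonglongrightarrow> 0"
    proof -
      have "range A \<subseteq> sets M" by auto
      from finite_Lim_measure_decseq[OF this decA] capA show ?thesis by simp
    qed
    have "measure M (Y N) \<le> 0" for N
    proof (rule LIMSEQ_le_const[OF limA], intro exI[of _ N] allI impI)
      fix n assume n: "N \<le> n"
      have "Y N \<subseteq> (T^^n) -` A n \<inter> space M" using n Tn_space by (auto simp: Y_def A_def)
      then have "measure M (Y N) \<le> measure M ((T^^n) -` A n \<inter> space M)"
        by (intro finite_measure_mono) auto
      also have "\<dots> = measure M (A n)" unfolding measure_def by (simp add: emeasure_Tn)
      finally show "measure M (Y N) \<le> measure M (A n)" .
    qed
    then have "Y N \<in> null_sets M" for N
      by (metis Ym measure_le_0_iff null_setsI emeasure_eq_measure ennreal_0)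
    then have "(\<Union>N. Y N) \<in> null_sets M" by auto
    then have "AE y in M. y \<notin> (\<Union>N. Y N)" by (rule AE_not_in)
    then show ?thesis by (rule AE_mp) (auto intro!: AE_I2 simp: Y_def)
  qed
  then have "AE y in M. \<forall>r::nat. \<not> (\<exists>N. \<forall>n\<ge>N. real n / Suc r \<le> Phi ((T^^n) y))"
    by (simp add: AE_all_countable)
  with bnd ca cb show ?thesis
  proof eventually_elim
    case (elim y)
    define La where "La = lim (\<lambda>n. a n y / n)"
    define Lb where "Lb = lim (\<lambda>n. b n y / n)"
    have la: "(\<lambda>n. a n y / n) \<longlonglongrightarrow> La" using elim(2) by (simp add: La_def convergent_LIMSEQ_iff)
    have lb: "(\<lambda>n. b n y / n) \<longlonglongrightarrow> Lb" using elim(3) by (simp add: Lb_def convergent_LIMSEQ_iff)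
    show "Lb \<le> La" unfolding La_def[symmetric] Lb_def[symmetric]
    proof (rule ccontr)
      assume "\<not> Lb \<le> La"
      define dl where "dl = (Lb - La) / 4"
      have dl: "0 < dl" using \<open>\<not> Lb \<le> La\<close> by (simp add: dl_def)
      obtain r :: nat where r: "1 / Suc r < dl" using dl by (metis nat_approx_posE of_nat_Suc)
      have ev: "eventually (\<lambda>n. Lb - dl < b n y / n \<and> a n y / n < La + dl \<and> Psi y / n < dl) sequentially"
      proof (intro eventually_conj)
        show "eventually (\<lambda>n. Lb - dl < b n y / n) sequentially"
          using order_tendstoD(1)[OF lb, of "Lb - dl"] dl by simp
        show "eventually (\<lambda>n. a n y / n < La + dl) sequentially"
          using order_tendstoD(2)[OF la, of "La + dl"] dl by simp
        show "eventually (\<lambda>n. Psi y / n < dl) sequentially"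
          using order_tendstoD(2)[OF lim_const_over_n[of "Psi y"] dl] by simp
      qed
      then obtain N where N: "\<And>n. N \<le> n \<Longrightarrow> Lb - dl < b n y / n \<and> a n y / n < La + dl \<and> Psi y / n < dl"
        by (auto simp: eventually_sequentially)
      from elim(4) obtain n where n: "max N 1 \<le> n" "\<not> real n / Suc r \<le> Phi ((T^^n) y)"
        by blast
      have npos: "0 < real n" using n(1) by simp
      have "b n y / n \<le> a n y / n + Psi y / n + Phi ((T^^n) y) / n"
        using elim(1) npos by (simp add: add_divide_distrib[symmetric] divide_right_mono)
      also have "Phi ((T^^n) y) / n < 1 / Suc r"
        using n(2) npos by (simp add: divide_less_eq field_simps)
      finally have "b n y / n < a n y / n + Psi y / n + 1 / Suc r" by simp
      moreover have "Lb - dl < b n y / n" "a n y / n < La + dl" "Psi y / n < dl"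
        using N[of n] n(1) by auto
      moreover have "Lb = La + 4 * dl" unfolding dl_def by argo
      ultimately show False using r by linarith
    qed
  qed
qed


lemma dirB:
  fixes a b :: "nat \<Rightarrow> 'a \<Rightarrow> real" and Phi Psi :: "'a \<Rightarrow> real" and Ti :: "'a \<Rightarrow> 'a"
  assumes Ti: "mpt M Ti" and TTi: "\<And>z. z \<in> space M \<Longrightarrow> T (Ti z) = z"
    and am[measurable]: "\<And>n. a n \<in> borel_measurable M"
    and bm[measurable]: "\<And>n. b n \<in> borel_measurable M"
    and Phim[measurable]: "Phi \<in> borel_measurable M"
    and bnd: "AE y in M. \<forall>n. a n y \<le> Phi y + b n y + Psi ((T^^n) y)"
    and ca: "AE y in M. convergent (\<lambda>n. a n y / n)"
    and cb: "AE y in M. convergent (\<lambda>n. b n y / n)"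
  shows "AE y in M. lim (\<lambda>n. a n y / n) \<le> lim (\<lambda>n. b n y / n)"
proof -
  interpret I: mpt M Ti by (rule Ti)
  have inv_pow: "(T^^n) ((Ti^^n) z) = z" if z: "z \<in> space M" for n z
  proof (induction n)
    case 0 show ?case by simp
  next
    case (Suc n)
    have e1: "(T^^Suc n) w = (T^^n) (T w)" for w by (simp add: funpow_Suc_right del: funpow.simps)
    have "(T^^Suc n) ((Ti^^Suc n) z) = (T^^n) (T (Ti ((Ti^^n) z)))" unfolding e1 by simp
    also have "T (Ti ((Ti^^n) z)) = (Ti^^n) z" using I.Tn_space[OF z] TTi by blast
    finally show ?case using Suc by simp
  qed
  define Q where "Q y = ((\<forall>n. a n y \<le> Phi y + b n y + Psi ((T^^n) y))
      \<and> convergent (\<lambda>n. a n y / n) \<and> convergent (\<lambda>n. b n y / n))" for y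
  have "AE y in M. Q y" using bnd ca cb by eventually_elim (simp add: Q_def)
  then obtain N0 where N0: "N0 \<in> null_sets M" "{y\<in>space M. \<not> Q y} \<subseteq> N0"
    unfolding eventually_ae_filter by blast
  have N0m[measurable]: "N0 \<in> sets M" using N0(1) by auto
  define La where "La y = lim (\<lambda>n. a n y / n)" for y
  define Lb where "Lb y = lim (\<lambda>n. b n y / n)" for y
  have Lam[measurable]: "La \<in> borel_measurable M" unfolding La_def by measurable
  have Lbm[measurable]: "Lb \<in> borel_measurable M" unfolding Lb_def by measurable
  define D where "D r N = (space M - N0) \<inter> {y\<in>space M. Lb y + 4 / Suc r < La y \<and>
      (\<forall>n\<ge>N. \<bar>a n y / n - La y\<bar> \<le> 1 / Suc r \<and> \<bar>b n y / n - Lb y\<bar> \<le> 1 / Suc r) \<and> Phi y \<le> N / Suc r}"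
    for r N :: nat
  have Dm[measurable]: "D r N \<in> sets M" for r N unfolding D_def by measurable
  have Dnull: "D r N \<in> null_sets M" for r N
  proof (rule ccontr)
    assume nn: "D r N \<notin> null_sets M"
    then have mD: "0 < measure M (D r N)"
      using Dm by (metis emeasure_eq_measure ennreal_0 measure_nonneg not_le_imp_less null_setsI order_antisym)
    define V where "V n = (Ti^^n) -` D r N \<inter> space M" for n
    have Vm[measurable]: "V n \<in> sets M" for n unfolding V_def by measurable
    have mV: "measure M (V n) = measure M (D r N)" for n
      unfolding V_def measure_def by (simp add: I.emeasure_Tn)
    define W where "W k = (\<Union>n\<in>{k..}. V n)" for k
    have Wm[measurable]: "W k \<in> sets M" for k unfolding W_def by measurable
    have decW: "decseq W" unfolding decseq_def W_def by (auto intro: order_trans)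
    have mW: "measure M (D r N) \<le> measure M (W k)" for k
    proof -
      have "V k \<subseteq> W k" unfolding W_def by auto
      then have "measure M (V k) \<le> measure M (W k)" by (intro finite_measure_mono) auto
      then show ?thesis using mV by simp
    qed
    have "(\<lambda>k. measure M (W k)) \<longlonglongrightarrow> measure M (\<Inter>k. W k)"
    proof -
      have "range W \<subseteq> sets M" by auto
      from finite_Lim_measure_decseq[OF this decW] show ?thesis .
    qed
    then have "measure M (D r N) \<le> measure M (\<Inter>k. W k)"
      by (rule LIMSEQ_le_const) (use mW in auto)
    then have "(\<Inter>k. W k) \<noteq> {}" using mD by auto
    then obtain z where z: "\<And>k. z \<in> W k" by blast
    then have zs: "z \<in> space M" unfolding W_def V_def by blast
    define e :: real where "e = 1 / Suc r"
    have e: "0 < e" by (simp add: e_def)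
    obtain k :: nat where k: "Suc r * Psi z < real k" using reals_Archimedean2 by blast
    from z[of "max k (max N 1)"] obtain n where n: "max k (max N 1) \<le> n" "z \<in> V n"
      unfolding W_def by auto
    define y where "y = (Ti^^n) z"
    have yD: "y \<in> D r N" using n(2) by (simp add: V_def y_def)
    have ys: "y \<in> space M" using yD by (simp add: D_def)
    have Qy: "Q y" using yD N0(2) ys by (auto simp: D_def)
    have Tny: "(T^^n) y = z" unfolding y_def by (rule inv_pow[OF zs])
    have npos: "0 < real n" using n(1) by simp
    have b1: "a n y \<le> Phi y + b n y + Psi z" using Qy Tny by (auto simp: Q_def)
    have b2: "Lb y + 4 * e < La y" "\<bar>a n y / n - La y\<bar> \<le> e" "\<bar>b n y / n - Lb y\<bar> \<le> e"
      "Phi y \<le> N * e"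
      using yD n(1) by (auto simp: D_def e_def)
    have "a n y / n \<le> Phi y / n + b n y / n + Psi z / n"
      using b1 npos by (simp add: add_divide_distrib[symmetric] divide_right_mono)
    moreover have "Phi y / n \<le> e"
    proof -
      have "Phi y \<le> n * e" using b2(4) n(1) e
        by (meson max.boundedE mult_right_mono of_nat_le_iff order_trans less_imp_le)
      then show ?thesis using npos by (simp add: divide_le_eq mult.commute)
    qed
    moreover have "Psi z / n < e"
    proof -
      have "Psi z * Suc r < n" using k n(1) by (simp add: mult.commute)
      then have "Psi z < n * e" by (simp add: e_def field_simps)
      then show ?thesis using npos by (simp add: divide_less_eq mult.commute)
    qed
    ultimately show False using b2 by linarith
  qed
  have "AE y in M. \<forall>r N. y \<notin> D r N"
    using Dnull by (simp add: AE_all_countable AE_not_in)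
  moreover have "AE y in M. y \<notin> N0" using N0(1) by (rule AE_not_in)
  moreover have "AE y in M. Q y" by fact
  ultimately have "AE y in M. (\<forall>r N. y \<notin> D r N) \<and> y \<notin> N0 \<and> Q y"
    by eventually_elim auto
  then show ?thesis
  proof (rule AE_mp, intro AE_I2 impI)
    fix y assume ys: "y \<in> space M" and H: "(\<forall>r N. y \<notin> D r N) \<and> y \<notin> N0 \<and> Q y"
    show "lim (\<lambda>n. a n y / n) \<le> lim (\<lambda>n. b n y / n)" unfolding La_def[symmetric] Lb_def[symmetric]
    proof (rule ccontr)
      assume "\<not> La y \<le> Lb y"
      then have gap: "0 < La y - Lb y" by simp
      obtain r :: nat where r: "1 / Suc r < (La y - Lb y) / 4"
        using gap by (metis nat_approx_posE of_nat_Suc zero_less_divide_iff zero_less_numeral)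
      have la: "(\<lambda>n. a n y / n) \<longlonglongrightarrow> La y" using H by (simp add: Q_def La_def convergent_LIMSEQ_iff)
      have lb: "(\<lambda>n. b n y / n) \<longlonglongrightarrow> Lb y" using H by (simp add: Q_def Lb_def convergent_LIMSEQ_iff)
      have pe: "0 < 1 / real (Suc r)" by simp
      obtain N1 where N1: "\<And>n. N1 \<le> n \<Longrightarrow> \<bar>a n y / n - La y\<bar> < 1 / Suc r"
        using LIMSEQ_D[OF la pe] by (auto simp: real_norm_def)
      obtain N2 where N2: "\<And>n. N2 \<le> n \<Longrightarrow> \<bar>b n y / n - Lb y\<bar> < 1 / Suc r"
        using LIMSEQ_D[OF lb pe] by (auto simp: real_norm_def)
      obtain N3 :: nat where N3: "Phi y * Suc r \<le> real N3" using real_arch_simple by blast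
      define N where "N = max N1 (max N2 N3)"
      have "Lb y + 4 / Suc r < La y" using r by (simp add: field_simps)
      moreover have "\<forall>n\<ge>N. \<bar>a n y / n - La y\<bar> \<le> 1 / Suc r \<and> \<bar>b n y / n - Lb y\<bar> \<le> 1 / Suc r"
        using N1 N2 by (auto simp: N_def less_imp_le)
      moreover have "Phi y \<le> N / Suc r"
      proof -
        have "real N3 \<le> real N" by (simp add: N_def)
        with N3 have "Phi y * Suc r \<le> N" by linarith
        then show ?thesis by (simp add: field_simps)
      qed
      ultimately have "y \<in> D r N" using ys H by (simp add: D_def)
      with H show False by blast
    qed
  qed
qed

end

lemma AE_transfer:
  assumes f[measurable]: "f \<in> measurable M N" and d: "distr M N f = N"
    and ae: "AE x in N. P x"
  shows "AE y in M. P (f y)"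
proof -
  from ae obtain Z where Z: "Z \<in> null_sets N" "{x\<in>space N. \<not> P x} \<subseteq> Z"
    unfolding eventually_ae_filter by blast
  have Zm: "Z \<in> sets N" using Z(1) by auto
  have "emeasure M (f -` Z \<inter> space M) = emeasure (distr M N f) Z"
    by (rule emeasure_distr[symmetric]) (use Zm in auto)
  also have "\<dots> = 0" using d Z(1) by (simp add: null_sets_def)
  finally have "f -` Z \<inter> space M \<in> null_sets M" using Zm by (auto simp: null_sets_def)
  moreover have "{y\<in>space M. \<not> P (f y)} \<subseteq> f -` Z \<inter> space M"
    using Z(2) measurable_space[OF f] by auto
  ultimately show ?thesis by (auto intro: AE_I')
qed

lemma aut_pow:
  assumes "aut_subgroup M \<Gamma>" "\<gamma> \<in> \<Gamma>"
  shows "\<gamma> ^^ n \<in> \<Gamma>"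
proof (induction n)
  case 0 then show ?case using assms by (simp add: aut_subgroup_def id_def)
next
  case (Suc n)
  have "\<gamma> \<circ> \<gamma>^^n \<in> \<Gamma>" using Suc assms unfolding aut_subgroup_def by blast
  then show ?case by (simp only: funpow.simps(2))
qed

lemma aut_mpt:
  assumes "prob_space M" "T \<in> Aut M"
  shows "mpt M T"
  using assms unfolding Aut_def measure_preserving_def mpt_def mpt_axioms_def by auto

lemma aut_inv_mpt:
  assumes "prob_space M" "T \<in> Aut M"
  shows "mpt M (aut_inv M T)"
  using assms unfolding Aut_def measure_preserving_def mpt_def mpt_axioms_def by auto

lemma aut_TTi:
  assumes "T \<in> Aut M" "z \<in> space M"
  shows "T (aut_inv M T z) = z"
  using assms unfolding Aut_def aut_inv_def by (auto intro: f_the_inv_into_f_bij_betw)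

lemma aut_space: "T \<in> Aut M \<Longrightarrow> x \<in> space M \<Longrightarrow> (T ^^ n) x \<in> space M"
  by (induction n) (auto simp: Aut_def bij_betw_def)

lemma aut_off: "T \<in> Aut M \<Longrightarrow> x \<notin> space M \<Longrightarrow> (T ^^ n) x = x"
  by (induction n) (auto simp: Aut_def)

lemma theta_meas:
  assumes "subadditive_fun \<theta>"
  shows "\<theta> \<in> borel_measurable borel"
  using assms unfolding subadditive_fun_def by (auto intro: borel_measurable_continuous_onI)

lemma cocycle_meas:
  assumes "aut_subgroup M \<Gamma>" "subadditive_fun \<theta>" "cocycle M \<Gamma> \<alpha>" "\<gamma> \<in> \<Gamma>"
  shows "(\<lambda>x. \<theta> (\<alpha> x (\<gamma>^^n))) \<in> borel_measurable M"
proof -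
  have "(\<lambda>x. \<alpha> x (\<gamma>^^n)) \<in> borel_measurable M"
    using assms aut_pow[OF assms(1,4)] unfolding cocycle_def by blast
  then show ?thesis using theta_meas[OF assms(2)] by (rule measurable_compose)
qed

lemma cocycle_conv:
  assumes P: "prob_space M" and G: "aut_subgroup M \<Gamma>" and th: "subadditive_fun \<theta>"
    and c: "cocycle M \<Gamma> \<alpha>" and g: "\<gamma> \<in> \<Gamma>" and int: "integrable M (\<lambda>x. \<theta> (\<alpha> x \<gamma>))"
  shows "AE x in M. convergent (\<lambda>n. \<theta> (\<alpha> x (\<gamma>^^n)) / n)"
proof -
  have "\<gamma> \<in> Aut M" using G g by (auto simp: aut_subgroup_def)
  interpret mpt M \<gamma> by (rule aut_mpt[OF P \<open>\<gamma> \<in> Aut M\<close>])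
  show ?thesis
  proof (rule kingman[where g="\<lambda>n x. \<theta> (\<alpha> x (\<gamma>^^n))"])
    show "(\<lambda>x. \<theta> (\<alpha> x (\<gamma>^^n))) \<in> borel_measurable M" for n by (rule cocycle_meas[OF G th c g])
    show "0 \<le> \<theta> (\<alpha> x (\<gamma>^^n))" for n x using th by (simp add: subadditive_fun_def)
    show "integrable M (\<lambda>x. \<theta> (\<alpha> x (\<gamma>^^1)))" using int by simp
    have "AE x in M. \<theta> (\<alpha> x (\<gamma>^^(p+q))) \<le> \<theta> (\<alpha> x (\<gamma>^^p)) + \<theta> (\<alpha> ((\<gamma>^^p) x) (\<gamma>^^q))" for p q
    proof -
      have "AE x in M. \<alpha> x ((\<gamma>^^q) \<circ> (\<gamma>^^p)) = \<alpha> x (\<gamma>^^p) + \<alpha> ((\<gamma>^^p) x) (\<gamma>^^q)"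
        using c aut_pow[OF G g] unfolding cocycle_def by blast
      moreover have "(\<gamma>^^q) \<circ> (\<gamma>^^p) = \<gamma>^^(p+q)" by (simp only: funpow_add[symmetric] add.commute)
      ultimately have "AE x in M. \<alpha> x (\<gamma>^^(p+q)) = \<alpha> x (\<gamma>^^p) + \<alpha> ((\<gamma>^^p) x) (\<gamma>^^q)" by simp
      then show ?thesis
      proof eventually_elim
        case (elim x)
        then show ?case using th unfolding subadditive_fun_def by simp
      qed
    qed
    then show "AE x in M. \<forall>p q. \<theta> (\<alpha> x (\<gamma>^^(p+q))) \<le> \<theta> (\<alpha> x (\<gamma>^^p)) + \<theta> (\<alpha> ((\<gamma>^^p) x) (\<gamma>^^q))"
      by (simp add: AE_all_countable)
  qed
qed


lemma iso_facts:
  assumes "isomorphism M1 M2 h"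
  shows "bij_betw h (space M1) (space M2)"
    and "x \<in> space M1 \<Longrightarrow> h x \<in> space M2"
    and "y \<in> space M2 \<Longrightarrow> the_inv_into (space M1) h y \<in> space M1"
    and "y \<in> space M2 \<Longrightarrow> h (the_inv_into (space M1) h y) = y"
    and "x \<in> space M1 \<Longrightarrow> the_inv_into (space M1) h (h x) = x"
    and "the_inv_into (space M1) h \<in> measurable M2 M1"
    and "distr M2 M1 (the_inv_into (space M1) h) = M1"
  using assms unfolding isomorphism_def measure_preserving_def
  by (auto simp: bij_betw_def the_inv_into_into f_the_inv_into_f the_inv_into_f_f
      intro: f_the_inv_into_f_bij_betw)

lemma conj_pow:
  assumes iso: "isomorphism M1 M2 h" and g: "\<gamma> \<in> Aut M1"
  shows "(conj_by M1 M2 h \<gamma>) ^^ n = conj_by M1 M2 h (\<gamma> ^^ n)"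
proof (induction n)
  case 0
  show ?case by (rule ext) (auto simp: conj_by_def iso_facts(4)[OF iso])
next
  case (Suc n)
  show ?case
  proof (rule ext)
    fix y
    show "(conj_by M1 M2 h \<gamma> ^^ Suc n) y = conj_by M1 M2 h (\<gamma> ^^ Suc n) y"
    proof (cases "y \<in> space M2")
      case True
      let ?x = "the_inv_into (space M1) h y"
      have x: "?x \<in> space M1" using iso_facts(3)[OF iso True] .
      have gx: "(\<gamma>^^n) ?x \<in> space M1" using aut_space[OF g x] .
      have "(conj_by M1 M2 h \<gamma> ^^ Suc n) y = conj_by M1 M2 h \<gamma> (conj_by M1 M2 h (\<gamma>^^n) y)"
        using Suc by simp
      also have "conj_by M1 M2 h (\<gamma>^^n) y = h ((\<gamma>^^n) ?x)" using True by (simp add: conj_by_def)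
      also have "conj_by M1 M2 h \<gamma> (h ((\<gamma>^^n) ?x)) = h (\<gamma> ((\<gamma>^^n) ?x))"
        using iso_facts(2,5)[OF iso gx] by (simp add: conj_by_def)
      also have "\<dots> = conj_by M1 M2 h (\<gamma> ^^ Suc n) y" using True by (simp add: conj_by_def)
      finally show ?thesis .
    next
      case False
      then show ?thesis using Suc by (simp add: conj_by_def)
    qed
  qed
qed

lemma transport_pow:
  assumes iso: "isomorphism M1 M2 h" and g: "\<gamma> \<in> Aut M1" and y: "y \<in> space M2"
  shows "transport_cocycle M1 M2 h \<alpha> y ((conj_by M1 M2 h \<gamma>) ^^ n)
       = \<alpha> (the_inv_into (space M1) h y) (\<gamma> ^^ n)"
proof -
  have "(\<lambda>x. if x \<in> space M1 then the_inv_into (space M1) h (conj_by M1 M2 h (\<gamma>^^n) (h x)) else x) = \<gamma>^^n"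
  proof (rule ext)
    fix x
    show "(if x \<in> space M1 then the_inv_into (space M1) h (conj_by M1 M2 h (\<gamma>^^n) (h x)) else x) = (\<gamma>^^n) x"
    proof (cases "x \<in> space M1")
      case True
      have gx: "(\<gamma>^^n) x \<in> space M1" using aut_space[OF g True] .
      show ?thesis using True iso_facts(2,5)[OF iso True] iso_facts(5)[OF iso gx]
        by (simp add: conj_by_def)
    next
      case False
      then show ?thesis using aut_off[OF g False] by simp
    qed
  qed
  then show ?thesis unfolding transport_cocycle_def conj_pow[OF iso g] by simp
qed

theorem theorem2:
  fixes M1 :: "'a measure" and M2 :: "'b measure"
    and \<Gamma>1 :: "('a \<Rightarrow> 'a) set" and \<Gamma>2 :: "('b \<Rightarrow> 'b) set"
    and \<alpha>1 :: "'a \<Rightarrow> ('a \<Rightarrow> 'a) \<Rightarrow> 'g::{group_add,topological_space}"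
    and \<alpha>2 :: "'b \<Rightarrow> ('b \<Rightarrow> 'b) \<Rightarrow> 'g"
    and \<theta> :: "'g \<Rightarrow> real" and h :: "'a \<Rightarrow> 'b"
    and \<gamma>1 :: "'a \<Rightarrow> 'a"
  assumes "prob_space M1" and "prob_space M2"
    and "aut_subgroup M1 \<Gamma>1" and "aut_subgroup M2 \<Gamma>2"
    and "subadditive_fun \<theta>"
    and "cocycle M1 \<Gamma>1 \<alpha>1" and "cocycle M2 \<Gamma>2 \<alpha>2"
    and "weakly_equivalent_through M1 \<Gamma>1 \<alpha>1 M2 \<Gamma>2 \<alpha>2 h"
    and "\<gamma>1 \<in> \<Gamma>1"
    and "integrable M1 (\<lambda>x. \<theta> (\<alpha>1 x \<gamma>1))"
    and "integrable M2 (\<lambda>x. \<theta> (\<alpha>2 x (conj_by M1 M2 h \<gamma>1)))"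
  shows "Theta_mu M1 \<theta> \<alpha>1 \<gamma>1 = Theta_mu M2 \<theta> \<alpha>2 (conj_by M1 M2 h \<gamma>1)"
proof -
  note P1 = assms(1) and P2 = assms(2) and G1 = assms(3) and G2 = assms(4) and th = assms(5)
    and c1 = assms(6) and c2 = assms(7) and we = assms(8) and g1 = assms(9)
    and int1 = assms(10) and int2 = assms(11)
  define T where "T = conj_by M1 M2 h \<gamma>1"
  define hi where "hi = the_inv_into (space M1) h"
  have iso: "isomorphism M1 M2 h" and G2eq: "\<Gamma>2 = conj_by M1 M2 h ` \<Gamma>1"
    and coh: "cohomologous M2 \<Gamma>2 (transport_cocycle M1 M2 h \<alpha>1) \<alpha>2"
    using we unfolding weakly_equivalent_through_def by auto
  have gA: "\<gamma>1 \<in> Aut M1" using G1 g1 by (auto simp: aut_subgroup_def)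
  have TG: "T \<in> \<Gamma>2" using G2eq g1 by (simp add: T_def)
  have TA: "T \<in> Aut M2" using G2 TG by (auto simp: aut_subgroup_def)
  have TnG: "T^^n \<in> \<Gamma>2" for n by (rule aut_pow[OF G2 TG])
  interpret M2: mpt M2 T by (rule aut_mpt[OF P2 TA])
  have hi_meas[measurable]: "hi \<in> measurable M2 M1" unfolding hi_def by (rule iso_facts(6)[OF iso])
  have hi_distr: "distr M2 M1 hi = M1" unfolding hi_def by (rule iso_facts(7)[OF iso])
  have thetam[measurable]: "\<theta> \<in> borel_measurable borel" by (rule theta_meas[OF th])
  define a where "a n y = \<theta> (\<alpha>2 y (T^^n))" for n y
  define g where "g n x = \<theta> (\<alpha>1 x (\<gamma>1^^n))" for n x
  define b where "b n y = g n (hi y)" for n y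
  have am[measurable]: "a n \<in> borel_measurable M2" for n
    unfolding a_def by (rule cocycle_meas[OF G2 th c2 TG])
  have gm[measurable]: "g n \<in> borel_measurable M1" for n
    unfolding g_def by (rule cocycle_meas[OF G1 th c1 g1])
  have bm[measurable]: "b n \<in> borel_measurable M2" for n unfolding b_def by measurable
  have ca: "AE y in M2. convergent (\<lambda>n. a n y / n)"
    unfolding a_def by (rule cocycle_conv[OF P2 G2 th c2 TG]) (use int2 in \<open>simp add: T_def\<close>)
  have cg: "AE x in M1. convergent (\<lambda>n. g n x / n)"
    unfolding g_def by (rule cocycle_conv[OF P1 G1 th c1 g1 int1])
  have cb: "AE y in M2. convergent (\<lambda>n. b n y / n)"
    unfolding b_def by (rule AE_transfer[OF hi_meas hi_distr cg])
  obtain \<phi> where phim[measurable]: "\<phi> \<in> borel_measurable M2"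
    and phi: "\<And>\<gamma>. \<gamma> \<in> \<Gamma>2 \<Longrightarrow> AE y in M2. \<alpha>2 y \<gamma> = \<phi> y + transport_cocycle M1 M2 h \<alpha>1 y \<gamma> - \<phi> (\<gamma> y)"
    using coh unfolding cohomologous_def by blast
  have idn: "AE y in M2. \<forall>n. \<alpha>2 y (T^^n) = \<phi> y + \<alpha>1 (hi y) (\<gamma>1^^n) - \<phi> ((T^^n) y)"
  proof -
    have "AE y in M2. \<alpha>2 y (T^^n) = \<phi> y + \<alpha>1 (hi y) (\<gamma>1^^n) - \<phi> ((T^^n) y)" for n
    proof -
      have "AE y in M2. \<alpha>2 y (T^^n) = \<phi> y + transport_cocycle M1 M2 h \<alpha>1 y (T^^n) - \<phi> ((T^^n) y)"
        by (rule phi[OF TnG])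
      then show ?thesis
        by (rule AE_mp) (auto intro!: AE_I2 simp: T_def hi_def transport_pow[OF iso gA])
    qed
    then show ?thesis by (simp add: AE_all_countable)
  qed
  have thsub: "\<theta> (u + v) \<le> \<theta> u + \<theta> v" for u v using th by (simp add: subadditive_fun_def)
  have bndA: "AE y in M2. \<forall>n. b n y \<le> a n y + \<theta> (- \<phi> y) + \<theta> (\<phi> ((T^^n) y))"
    using idn
  proof eventually_elim
    case (elim y)
    show ?case
    proof
      fix n
      define u where "u = \<phi> y"
      define v where "v = \<alpha>1 (hi y) (\<gamma>1^^n)"
      define w where "w = \<phi> ((T^^n) y)"
      have e: "\<alpha>2 y (T^^n) = u + v - w" using elim by (simp add: u_def v_def w_def)
      have "- u + (u + v - w) + w = v" by (simp only: add_diff_eq[symmetric] minus_add_cancel diff_add_cancel)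
      then have "v = - u + (u + v - w) + w" by simp
      moreover have "\<theta> (- u + (u + v - w) + w) \<le> \<theta> (- u + (u + v - w)) + \<theta> w" by (rule thsub)
      moreover have "\<theta> (- u + (u + v - w)) \<le> \<theta> (- u) + \<theta> (u + v - w)" by (rule thsub)
      ultimately have "\<theta> v \<le> \<theta> (- u) + \<theta> (u + v - w) + \<theta> w" by simp
      then show "b n y \<le> a n y + \<theta> (- \<phi> y) + \<theta> (\<phi> ((T^^n) y))"
        unfolding a_def b_def g_def e by (simp add: u_def v_def w_def)
    qed
  qed
  have bndB: "AE y in M2. \<forall>n. a n y \<le> \<theta> (\<phi> y) + b n y + \<theta> (- \<phi> ((T^^n) y))"
    using idn
  proof eventually_elim
    case (elim y)
    show ?case
    proof
      fix n
      define u where "u = \<phi> y"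
      define v where "v = \<alpha>1 (hi y) (\<gamma>1^^n)"
      define w where "w = \<phi> ((T^^n) y)"
      have "u + v - w = u + (v + - w)" by (simp only: diff_conv_add_uminus add.assoc)
      then have e: "\<alpha>2 y (T^^n) = u + (v + - w)" using elim by (simp only: u_def v_def w_def)
      have "\<theta> (u + (v + - w)) \<le> \<theta> u + \<theta> (v + - w)" by (rule thsub)
      moreover have "\<theta> (v + - w) \<le> \<theta> v + \<theta> (- w)" by (rule thsub)
      ultimately have "\<theta> (u + (v + - w)) \<le> \<theta> u + \<theta> v + \<theta> (- w)" by simp
      then show "a n y \<le> \<theta> (\<phi> y) + b n y + \<theta> (- \<phi> ((T^^n) y))"
        unfolding a_def b_def g_def e by (simp add: u_def v_def w_def)
    qed
  qed
  have Phim[measurable]: "(\<lambda>y. \<theta> (\<phi> y)) \<in> borel_measurable M2" by measurable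
  have dA: "AE y in M2. lim (\<lambda>n. b n y / n) \<le> lim (\<lambda>n. a n y / n)"
    by (rule M2.dirA[OF Phim bndA ca cb])
  have dB: "AE y in M2. lim (\<lambda>n. a n y / n) \<le> lim (\<lambda>n. b n y / n)"
    by (rule M2.dirB[OF aut_inv_mpt[OF P2 TA] aut_TTi[OF TA] am bm Phim bndB ca cb])
  have eq: "AE y in M2. Theta_pt \<theta> \<alpha>2 T y = Theta_pt \<theta> \<alpha>1 \<gamma>1 (hi y)"
    using dA dB by eventually_elim (simp add: Theta_pt_def a_def b_def g_def)
  have Th1m[measurable]: "Theta_pt \<theta> \<alpha>1 \<gamma>1 \<in> borel_measurable M1"
  proof -
    have "(\<lambda>x. lim (\<lambda>n. g n x / n)) \<in> borel_measurable M1" by measurable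
    moreover have "Theta_pt \<theta> \<alpha>1 \<gamma>1 = (\<lambda>x. lim (\<lambda>n. g n x / n))"
      by (rule ext) (simp add: Theta_pt_def g_def)
    ultimately show ?thesis by simp
  qed
  have Th2m[measurable]: "Theta_pt \<theta> \<alpha>2 T \<in> borel_measurable M2"
  proof -
    have "(\<lambda>y. lim (\<lambda>n. a n y / n)) \<in> borel_measurable M2" by measurable
    moreover have "Theta_pt \<theta> \<alpha>2 T = (\<lambda>y. lim (\<lambda>n. a n y / n))"
      by (rule ext) (simp add: Theta_pt_def a_def)
    ultimately show ?thesis by simp
  qed
  have "Theta_mu M2 \<theta> \<alpha>2 T = (\<integral>y. Theta_pt \<theta> \<alpha>1 \<gamma>1 (hi y) \<partial>M2)"
    unfolding Theta_mu_def by (rule integral_cong_AE) (use eq in auto)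
  also have "\<dots> = (\<integral>x. Theta_pt \<theta> \<alpha>1 \<gamma>1 x \<partial>distr M2 M1 hi)"
    by (rule integral_distr[symmetric]) auto
  also have "\<dots> = Theta_mu M1 \<theta> \<alpha>1 \<gamma>1" by (simp add: hi_distr Theta_mu_def)
  finally show ?thesis by (simp add: T_def)
qed

end
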